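(* If $A$ is $1$-Q-Koszul, i.e. $A_0$ is quasi-hereditary with weight poset $\Lambda$ and for all $\lambda,\mu\in\Lambda$ and all $m\in\mathbb Z$, ${\rm ext}^1_A(\Delta^0(\lambda),\nabla_0(\mu)\langle m\rangle)\neq0$ implies $m=1$, then $A$ is tight, i.e. $A$ is generated as an algebra by $A_0$ and $A_1$ (equivalently $A_n=A_1\cdots A_1$ ($n$ factors) for all $n\ge1$).
   Context: Let $k$ be an algebraically closed field and $A=\bigoplus_{i\ge 0}A_i$ a finite-dimensional positively graded $k$-algebra. $A$-grmod is the category of finite-dimensional $\mathbb Z$-graded left $A$-modules; $M\langle r\rangle_i=M_{i-r}$; ${\rm ext}^n_A$ denotes Ext in $A$-grmod. $A_0$-modules are regarded as graded $A$-modules concentrated in grade $0$ via $A\to A/A_{\ge1}\cong A_0$. When $A_0$ is quasi-hereditary with weight poset $\Lambda$, $\Delta^0(\lambda)$ and $\nabla_0(\lambda)$ denote its standard and costandard modules. *)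

theory Defs
  imports Main "HOL-Computational_Algebra.Polynomial"
begin

text \<open>The algebra A is the whole type 'a (a ring with 1), a k-algebra via scale,
  with grading Agr i = A_i (i a natural number).\<close>

definition graded_decomp :: "(nat \<Rightarrow> 'a::ring_1 set) \<Rightarrow> 'a \<Rightarrow> (nat \<Rightarrow> 'a) \<Rightarrow> bool" where
  "graded_decomp Agr x c \<longleftrightarrow>
     (\<forall>i. c i \<in> Agr i) \<and> finite {i. c i \<noteq> 0} \<and> x = (\<Sum>i\<in>{i. c i \<noteq> 0}. c i)"

definition hcomp :: "(nat \<Rightarrow> 'a::ring_1 set) \<Rightarrow> nat \<Rightarrow> 'a \<Rightarrow> 'a" where
  "hcomp Agr i x = (THE c. graded_decomp Agr x c) i"

definition fd_pos_graded_algebra ::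
  "('k::field \<Rightarrow> 'a::ring_1 \<Rightarrow> 'a) \<Rightarrow> (nat \<Rightarrow> 'a set) \<Rightarrow> bool" where
  "fd_pos_graded_algebra scale Agr \<longleftrightarrow>
     Vector_Spaces.vector_space scale \<and>
     (\<forall>c x y. scale c (x * y) = scale c x * y \<and> scale c (x * y) = x * scale c y) \<and>
     (\<exists>B. finite B \<and> module.span scale B = UNIV) \<and>
     (\<forall>i. module.subspace scale (Agr i)) \<and>
     (\<forall>i j. \<forall>x\<in>Agr i. \<forall>y\<in>Agr j. x * y \<in> Agr (i + j)) \<and>
     1 \<in> Agr 0 \<and>
     (\<forall>x. \<exists>!c. graded_decomp Agr x c)"

inductive_set alg_gen :: "('k::field \<Rightarrow> 'a::ring_1 \<Rightarrow> 'a) \<Rightarrow> 'a set \<Rightarrow> 'a set"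
  for scale S where
  base: "x \<in> S \<Longrightarrow> x \<in> alg_gen scale S"
| one: "1 \<in> alg_gen scale S"
| add: "x \<in> alg_gen scale S \<Longrightarrow> y \<in> alg_gen scale S \<Longrightarrow> x + y \<in> alg_gen scale S"
| mult: "x \<in> alg_gen scale S \<Longrightarrow> y \<in> alg_gen scale S \<Longrightarrow> x * y \<in> alg_gen scale S"
| smult: "x \<in> alg_gen scale S \<Longrightarrow> scale c x \<in> alg_gen scale S"

text \<open>The k-structure is the action
  of the scalars scale c 1 of A.\<close>

record ('a, 'm) gmod =
  gcar :: "'m set"
  gzero :: 'm
  gadd :: "'m \<Rightarrow> 'm \<Rightarrow> 'm"
  gact :: "'a \<Rightarrow> 'm \<Rightarrow> 'm"
  gdeg :: "int \<Rightarrow> 'm set"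

definition gsum :: "('a, 'm) gmod \<Rightarrow> (int \<Rightarrow> 'm) \<Rightarrow> int set \<Rightarrow> 'm" where
  "gsum M c I = foldr (\<lambda>i acc. gadd M (c i) acc) (sorted_list_of_set I) (gzero M)"

definition is_gmod ::
  "('k::field \<Rightarrow> 'a::ring_1 \<Rightarrow> 'a) \<Rightarrow> (nat \<Rightarrow> 'a set) \<Rightarrow> ('a, 'm) gmod \<Rightarrow> bool" where
  "is_gmod scale Agr M \<longleftrightarrow>
     \<comment> \<open>abelian group\<close>
     gzero M \<in> gcar M \<and>
     (\<forall>x\<in>gcar M. \<forall>y\<in>gcar M. gadd M x y \<in> gcar M) \<and>
     (\<forall>x\<in>gcar M. \<forall>y\<in>gcar M. \<forall>z\<in>gcar M. gadd M (gadd M x y) z = gadd M x (gadd M y z)) \<and>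
     (\<forall>x\<in>gcar M. \<forall>y\<in>gcar M. gadd M x y = gadd M y x) \<and>
     (\<forall>x\<in>gcar M. gadd M (gzero M) x = x) \<and>
     (\<forall>x\<in>gcar M. \<exists>y\<in>gcar M. gadd M x y = gzero M) \<and>
     \<comment> \<open>left A-module\<close>
     (\<forall>a. \<forall>x\<in>gcar M. gact M a x \<in> gcar M) \<and>
     (\<forall>a. \<forall>x\<in>gcar M. \<forall>y\<in>gcar M. gact M a (gadd M x y) = gadd M (gact M a x) (gact M a y)) \<and>
     (\<forall>a b. \<forall>x\<in>gcar M. gact M (a + b) x = gadd M (gact M a x) (gact M b x)) \<and>
     (\<forall>a b. \<forall>x\<in>gcar M. gact M (a * b) x = gact M a (gact M b x)) \<and>
     (\<forall>x\<in>gcar M. gact M 1 x = x) \<and>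
     \<comment> \<open>grading: homogeneous components are subspaces, compatible with the grading of A,
         and M is their direct sum\<close>
     (\<forall>i. gdeg M i \<subseteq> gcar M \<and> gzero M \<in> gdeg M i \<and>
          (\<forall>x\<in>gdeg M i. \<forall>y\<in>gdeg M i. gadd M x y \<in> gdeg M i) \<and>
          (\<forall>c. \<forall>x\<in>gdeg M i. gact M (scale c 1) x \<in> gdeg M i)) \<and>
     (\<forall>i j. \<forall>a\<in>Agr i. \<forall>x\<in>gdeg M j. gact M a x \<in> gdeg M (int i + j)) \<and>
     (\<forall>x\<in>gcar M. \<exists>!c. (\<forall>i. c i \<in> gdeg M i) \<and> finite {i. c i \<noteq> gzero M} \<and>
                        x = gsum M c {i. c i \<noteq> gzero M}) \<and>
     \<comment> \<open>finite-dimensional over k: k-linear injection into k^n\<close>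
     (\<exists>(n::nat) (f :: 'm \<Rightarrow> nat \<Rightarrow> 'k). inj_on f (gcar M) \<and>
        (\<forall>x\<in>gcar M. \<forall>i\<ge>n. f x i = 0) \<and>
        (\<forall>x\<in>gcar M. \<forall>y\<in>gcar M. f (gadd M x y) = (\<lambda>i. f x i + f y i)) \<and>
        (\<forall>c. \<forall>x\<in>gcar M. f (gact M (scale c 1) x) = (\<lambda>i. c * f x i)))"

definition gmod_hom :: "('a, 'm) gmod \<Rightarrow> ('a, 'n) gmod \<Rightarrow> ('m \<Rightarrow> 'n) \<Rightarrow> bool" where
  "gmod_hom M N f \<longleftrightarrow>
     (\<forall>x\<in>gcar M. f x \<in> gcar N) \<and>
     (\<forall>x\<in>gcar M. \<forall>y\<in>gcar M. f (gadd M x y) = gadd N (f x) (f y)) \<and>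
     (\<forall>a. \<forall>x\<in>gcar M. f (gact M a x) = gact N a (f x)) \<and>
     (\<forall>i. \<forall>x\<in>gdeg M i. f x \<in> gdeg N i)"

definition shift :: "int \<Rightarrow> ('a, 'm) gmod \<Rightarrow> ('a, 'm) gmod" where
  "shift r M = M\<lparr>gdeg := (\<lambda>i. gdeg M (i - r))\<rparr>"

text \<open>ext^1_A(M,N) \<noteq> 0 in A-grmod (Yoneda description): there is a non-split short exact
  sequence 0 \<rightarrow> N \<rightarrow> E \<rightarrow> M \<rightarrow> 0 in A-grmod. Every such E is, as graded abelian group,
  isomorphic to N \<times> M with the canonical inclusion and projection, so E is taken on
  that carrier.\<close>
definition ext1_nonzero ::
  "('k::field \<Rightarrow> 'a::ring_1 \<Rightarrow> 'a) \<Rightarrow> (nat \<Rightarrow> 'a set) \<Rightarrow> ('a, 'm) gmod \<Rightarrow> ('a, 'n) gmod \<Rightarrow> bool" where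
  "ext1_nonzero scale Agr M N \<longleftrightarrow>
     (\<exists>E :: ('a, 'n \<times> 'm) gmod.
        is_gmod scale Agr E \<and>
        gcar E = gcar N \<times> gcar M \<and>
        gzero E = (gzero N, gzero M) \<and>
        (\<forall>x y. gadd E x y = (gadd N (fst x) (fst y), gadd M (snd x) (snd y))) \<and>
        (\<forall>i. gdeg E i = gdeg N i \<times> gdeg M i) \<and>
        gmod_hom N E (\<lambda>n. (n, gzero M)) \<and>
        gmod_hom E M snd \<and>
        \<not> (\<exists>s. gmod_hom M E s \<and> (\<forall>x\<in>gcar M. snd (s x) = x)))"

definition prim_idem :: "'a::ring_1 set \<Rightarrow> 'a \<Rightarrow> bool" where
  "prim_idem A0 e \<longleftrightarrow> e \<in> A0 \<and> e * e = e \<and> e \<noteq> 0 \<and>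
     \<not> (\<exists>f\<in>A0. \<exists>g\<in>A0. f * f = f \<and> g * g = g \<and> f * g = 0 \<and> g * f = 0 \<and>
          f \<noteq> 0 \<and> g \<noteq> 0 \<and> e = f + g)"

text \<open>left ideal A0 e (the indecomposable projective A0-module P(lambda))\<close>
definition lideal :: "'a::ring_1 set \<Rightarrow> 'a \<Rightarrow> 'a set" where
  "lideal A0 e = {a * e | a. a \<in> A0}"

definition lsub :: "'a::ring_1 set \<Rightarrow> 'a set \<Rightarrow> bool" where
  "lsub A0 X \<longleftrightarrow> X \<subseteq> A0 \<and> 0 \<in> X \<and> (\<forall>x\<in>X. \<forall>y\<in>X. x + y \<in> X) \<and> (\<forall>a\<in>A0. \<forall>x\<in>X. a * x \<in> X)"

definition liso :: "'a::ring_1 set \<Rightarrow> 'a set \<Rightarrow> 'a set \<Rightarrow> bool" where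
  "liso A0 X Y \<longleftrightarrow> (\<exists>\<phi>. bij_betw \<phi> X Y \<and> (\<forall>x\<in>X. \<forall>y\<in>X. \<phi> (x + y) = \<phi> x + \<phi> y) \<and>
                        (\<forall>a\<in>A0. \<forall>x\<in>X. \<phi> (a * x) = a * \<phi> x))"

text \<open>isomorphism of left A0-modules X/Y \<cong> X'/Y', given by a map X \<rightarrow> X'/Y' (via representatives)\<close>
definition qiso :: "'a::ring_1 set \<Rightarrow> 'a set \<Rightarrow> 'a set \<Rightarrow> 'a set \<Rightarrow> 'a set \<Rightarrow> bool" where
  "qiso A0 X Y X' Y' \<longleftrightarrow> (\<exists>f. (\<forall>x\<in>X. f x \<in> X') \<and>
       (\<forall>x\<in>X. \<forall>y\<in>X. f (x + y) - (f x + f y) \<in> Y') \<and>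
       (\<forall>a\<in>A0. \<forall>x\<in>X. f (a * x) - a * f x \<in> Y') \<and>
       (\<forall>x\<in>X. f x \<in> Y' \<longleftrightarrow> x \<in> Y) \<and>
       (\<forall>x'\<in>X'. \<exists>x\<in>X. x' - f x \<in> Y'))"

text \<open>trace of the P(mu), mu not \<le> lambda, in P(lambda) = A0 e_lambda; Delta(lambda) = P(lambda)/trace\<close>
definition std_tr ::
  "('k::field \<Rightarrow> 'a::ring_1 \<Rightarrow> 'a) \<Rightarrow> 'a set \<Rightarrow> 'l set \<Rightarrow> ('l \<times> 'l) set \<Rightarrow> ('l \<Rightarrow> 'a) \<Rightarrow> 'l \<Rightarrow> 'a set" where
  "std_tr scale A0 \<Lambda> R e la = module.span scale
     {a * e \<mu> * b * e la | a b \<mu>. a \<in> A0 \<and> b \<in> A0 \<and> \<mu> \<in> \<Lambda> \<and> (\<mu>, la) \<notin> R}"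

text \<open>right version: e_mu A0 eps A0 with eps = sum of e_nu, nu not \<le> mu;
  nabla(mu) = D(e_mu A0 / e_mu A0 eps A0)\<close>
definition costd_tr ::
  "('k::field \<Rightarrow> 'a::ring_1 \<Rightarrow> 'a) \<Rightarrow> 'a set \<Rightarrow> 'l set \<Rightarrow> ('l \<times> 'l) set \<Rightarrow> ('l \<Rightarrow> 'a) \<Rightarrow> 'l \<Rightarrow> 'a set" where
  "costd_tr scale A0 \<Lambda> R e \<mu> = module.span scale
     {e \<mu> * a * e \<nu> * b | a b \<nu>. a \<in> A0 \<and> b \<in> A0 \<and> \<nu> \<in> \<Lambda> \<and> (\<nu>, \<mu>) \<notin> R}"

definition quasi_hereditary ::
  "('k::field \<Rightarrow> 'a::ring_1 \<Rightarrow> 'a) \<Rightarrow> (nat \<Rightarrow> 'a set) \<Rightarrow> 'l set \<Rightarrow> ('l \<times> 'l) set \<Rightarrow> ('l \<Rightarrow> 'a) \<Rightarrow> bool" where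
  "quasi_hereditary scale Agr \<Lambda> R e \<longleftrightarrow>
     (let A0 = Agr 0; P = (\<lambda>la. lideal A0 (e la)); U = std_tr scale A0 \<Lambda> R e in
     \<comment> \<open>weight poset\<close>
     partial_order_on \<Lambda> R \<and>
     \<comment> \<open>the weights label the simple A0-modules L(lambda) = top of P(lambda) = A0 e_lambda\<close>
     (\<forall>la\<in>\<Lambda>. prim_idem A0 (e la)) \<and>
     (\<forall>la\<in>\<Lambda>. \<forall>\<mu>\<in>\<Lambda>. la \<noteq> \<mu> \<longrightarrow> e la * e \<mu> = 0) \<and>
     (\<forall>la\<in>\<Lambda>. \<forall>\<mu>\<in>\<Lambda>. la \<noteq> \<mu> \<longrightarrow> \<not> liso A0 (P la) (P \<mu>)) \<and>
     (\<forall>f. prim_idem A0 f \<longrightarrow> (\<exists>la\<in>\<Lambda>. liso A0 (lideal A0 f) (P la))) \<and>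
     \<comment> \<open>End(Delta(lambda)) = k\<close>
     (\<forall>la\<in>\<Lambda>. \<forall>f. ((\<forall>x\<in>P la. f x \<in> P la) \<and>
          (\<forall>x\<in>P la. \<forall>y\<in>P la. f (x + y) - (f x + f y) \<in> U la) \<and>
          (\<forall>a\<in>A0. \<forall>x\<in>P la. f (a * x) - a * f x \<in> U la) \<and>
          (\<forall>x\<in>U la. f x \<in> U la))
        \<longrightarrow> (\<exists>c. \<forall>x\<in>P la. f x - scale c x \<in> U la)) \<and>
     \<comment> \<open>ker(P(lambda) \<rightarrow> Delta(lambda)) has a filtration by Delta(mu), mu > lambda\<close>
     (\<forall>la\<in>\<Lambda>. \<exists>(n::nat) K \<mu>. K 0 = {0} \<and> K n = U la \<and>
        (\<forall>i\<le>n. lsub A0 (K i)) \<and>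
        (\<forall>i<n. K i \<subseteq> K (Suc i) \<and> \<mu> i \<in> \<Lambda> \<and> (la, \<mu> i) \<in> R \<and> \<mu> i \<noteq> la \<and>
               qiso A0 (K (Suc i)) (K i) (P (\<mu> i)) (U (\<mu> i)))))"

definition Delta0 ::
  "('k::field \<Rightarrow> 'a::ring_1 \<Rightarrow> 'a) \<Rightarrow> (nat \<Rightarrow> 'a set) \<Rightarrow> 'l set \<Rightarrow> ('l \<times> 'l) set \<Rightarrow> ('l \<Rightarrow> 'a) \<Rightarrow> 'l
     \<Rightarrow> ('a, 'a set) gmod" where
  "Delta0 scale Agr \<Lambda> R e la =
     (let U = std_tr scale (Agr 0) \<Lambda> R e la;
          C = (\<lambda>x. (\<lambda>u. x + u) ` U) ` lideal (Agr 0) (e la) in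
     \<lparr> gcar = C,
       gzero = U,
       gadd = (\<lambda>X Y. {x + y | x y. x \<in> X \<and> y \<in> Y}),
       gact = (\<lambda>a X. {hcomp Agr 0 a * x + u | x u. x \<in> X \<and> u \<in> U}),
       gdeg = (\<lambda>i. if i = 0 then C else {U}) \<rparr>)"

definition Nabla0 ::
  "('k::field \<Rightarrow> 'a::ring_1 \<Rightarrow> 'a) \<Rightarrow> (nat \<Rightarrow> 'a set) \<Rightarrow> 'l set \<Rightarrow> ('l \<times> 'l) set \<Rightarrow> ('l \<Rightarrow> 'a) \<Rightarrow> 'l
     \<Rightarrow> ('a, 'a \<Rightarrow> 'k) gmod" where
  "Nabla0 scale Agr \<Lambda> R e \<mu> =
     (let V = costd_tr scale (Agr 0) \<Lambda> R e \<mu>;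
          C = {f :: 'a \<Rightarrow> 'k. (\<forall>x y. f (x + y) = f x + f y) \<and> (\<forall>c x. f (scale c x) = c * f x) \<and>
                 (\<forall>x. f x = f (e \<mu> * hcomp Agr 0 x)) \<and> (\<forall>x\<in>V. f x = 0)} in
     \<lparr> gcar = C,
       gzero = (\<lambda>_. 0),
       gadd = (\<lambda>f g x. f x + g x),
       gact = (\<lambda>a f x. f (x * hcomp Agr 0 a)),
       gdeg = (\<lambda>i. if i = 0 then C else {\<lambda>_. 0}) \<rparr>)"

end

theory Submission
  imports Defs
begin

locale GA =
  fixes scale :: "'k::field \<Rightarrow> 'a::ring_1 \<Rightarrow> 'a" and Agr :: "nat \<Rightarrow> 'a set"
  assumes graded: "fd_pos_graded_algebra scale Agr"
begin

lemma VS: "vector_space scale" using graded unfolding fd_pos_graded_algebra_def by blast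

sublocale vector_space scale by (rule VS)

lemma scale_mult_both: "\<forall>c x y. scale c (x * y) = scale c x * y \<and> scale c (x * y) = x * scale c y"
  using graded unfolding fd_pos_graded_algebra_def by blast
lemma scale_mult_left: "scale c (x * y) = scale c x * y"
  using scale_mult_both[rule_format, of c x y] by (rule conjunct1)
lemma scale_mult_right: "scale c (x * y) = x * scale c y"
  using scale_mult_both[rule_format, of c x y] by (rule conjunct2)
lemma fin_span: "\<exists>B. finite B \<and> span B = UNIV"
  using graded unfolding fd_pos_graded_algebra_def by blast
lemma sub_Agr: "subspace (Agr i)"
  using graded unfolding fd_pos_graded_algebra_def by blast
lemma mult_Agr: "x \<in> Agr i \<Longrightarrow> y \<in> Agr j \<Longrightarrow> x * y \<in> Agr (i + j)"
  using graded unfolding fd_pos_graded_algebra_def by blast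
lemma one_Agr: "1 \<in> Agr 0"
  using graded unfolding fd_pos_graded_algebra_def by blast
lemma uniq_dec: "\<exists>!c. graded_decomp Agr x c"
  using graded unfolding fd_pos_graded_algebra_def by blast

lemma zero_Agr[simp]: "0 \<in> Agr i" using sub_Agr subspace_0 by blast
lemma add_Agr: "x \<in> Agr i \<Longrightarrow> y \<in> Agr i \<Longrightarrow> x + y \<in> Agr i" using sub_Agr subspace_add by blast
lemma diff_Agr: "x \<in> Agr i \<Longrightarrow> y \<in> Agr i \<Longrightarrow> x - y \<in> Agr i" using sub_Agr subspace_diff by blast
lemma neg_Agr: "x \<in> Agr i \<Longrightarrow> - x \<in> Agr i" using sub_Agr subspace_neg by blast
lemma scale_Agr: "x \<in> Agr i \<Longrightarrow> scale c x \<in> Agr i" using sub_Agr subspace_scale by blast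
lemma sum_Agr: "(\<And>j. j \<in> S \<Longrightarrow> f j \<in> Agr i) \<Longrightarrow> sum f S \<in> Agr i" using sub_Agr subspace_sum by blast

lemma scale_one_mult: "scale c 1 * x = scale c x"
  by (metis mult_1 scale_mult_left)
lemma mult_scale_one: "x * scale c 1 = scale c x"
  by (metis mult_1_right scale_mult_right)

abbreviation hc where "hc i x \<equiv> hcomp Agr i x"

lemma hcomp_eq:
  assumes "\<And>i. c i \<in> Agr i" "finite S" "\<And>i. i \<notin> S \<Longrightarrow> c i = 0" "x = sum c S"
  shows "hc i x = c i"
proof -
  have sub: "{i. c i \<noteq> 0} \<subseteq> S" using assms(3) by blast
  have gd: "graded_decomp Agr x c"
    unfolding graded_decomp_def using assms sub finite_subset[OF sub assms(2)]
    by (auto intro!: sum.mono_neutral_right)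
  have "(THE c. graded_decomp Agr x c) = c"
    using uniq_dec[of x] gd by (metis the1_equality)
  then show ?thesis by (simp add: hcomp_def)
qed

lemma hcomp_decomp: "graded_decomp Agr x (\<lambda>i. hc i x)"
proof -
  have "graded_decomp Agr x (THE c. graded_decomp Agr x c)"
    using uniq_dec[of x] by (rule theI')
  then show ?thesis by (simp add: hcomp_def[abs_def])
qed

lemma hcomp_in[simp]: "hc i x \<in> Agr i"
  using hcomp_decomp[of x] by (simp add: graded_decomp_def)

lemma hcomp_fin: "finite {i. hc i x \<noteq> 0}"
  using hcomp_decomp[of x] by (simp add: graded_decomp_def)

lemma hcomp_bound: "\<exists>N. \<forall>i\<ge>N. hc i x = 0"
proof -
  obtain N where N: "{i. hc i x \<noteq> 0} \<subseteq> {..<N}"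
    using finite_nat_bounded[OF hcomp_fin[of x]] by blast
  have "\<forall>i\<ge>N. hc i x = 0"
  proof (intro allI impI)
    fix i assume "N \<le> i"
    then have "i \<notin> {..<N}" by simp
    then show "hc i x = 0" using N by blast
  qed
  then show ?thesis by blast
qed

lemma hcomp_sum: assumes "finite S" "{i. hc i x \<noteq> 0} \<subseteq> S" shows "x = (\<Sum>i\<in>S. hc i x)"
proof -
  have "x = (\<Sum>i\<in>{i. hc i x \<noteq> 0}. hc i x)" using hcomp_decomp[of x] by (simp add: graded_decomp_def)
  also have "\<dots> = (\<Sum>i\<in>S. hc i x)" using assms by (intro sum.mono_neutral_left) auto
  finally show ?thesis .
qed

lemma hcomp_sum_lt: assumes "\<forall>i\<ge>N. hc i x = 0" shows "x = (\<Sum>i<N. hc i x)"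
proof (rule hcomp_sum)
  show "{i. hc i x \<noteq> 0} \<subseteq> {..<N}"
  proof (intro subsetI)
    fix i assume "i \<in> {i. hc i x \<noteq> 0}"
    then show "i \<in> {..<N}" using assms by (cases "i < N") auto
  qed
qed simp

lemma hcomp_homog: assumes "x \<in> Agr j" shows "hc i x = (if i = j then x else 0)"
  by (rule hcomp_eq[where S="{j}"]) (use assms in auto)

lemma hcomp_add: "hc i (x + y) = hc i x + hc i y"
proof -
  obtain N1 where N1: "\<forall>i\<ge>N1. hc i x = 0" using hcomp_bound by blast
  obtain N2 where N2: "\<forall>i\<ge>N2. hc i y = 0" using hcomp_bound by blast
  let ?N = "max N1 N2"
  show ?thesis
  proof (rule hcomp_eq[where S="{..<?N}"])
    show "hc i x + hc i y \<in> Agr i" for i by (simp add: add_Agr)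
    show "i \<notin> {..<?N} \<Longrightarrow> hc i x + hc i y = 0" for i using N1 N2 by auto
    have "x = (\<Sum>i<?N. hc i x)" "y = (\<Sum>i<?N. hc i y)"
      using N1 N2 by (auto intro!: hcomp_sum_lt)
    then show "x + y = (\<Sum>i<?N. hc i x + hc i y)" by (simp add: sum.distrib)
  qed simp
qed

lemma hcomp_scale: "hc i (scale c x) = scale c (hc i x)"
proof -
  obtain N where N: "\<forall>i\<ge>N. hc i x = 0" using hcomp_bound by blast
  show ?thesis
  proof (rule hcomp_eq[where S="{..<N}"])
    show "scale c (hc i x) \<in> Agr i" for i by (simp add: scale_Agr)
    show "i \<notin> {..<N} \<Longrightarrow> scale c (hc i x) = 0" for i using N by auto
    have xs: "x = (\<Sum>i<N. hc i x)" using N by (auto intro!: hcomp_sum_lt)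
    have "scale c x = scale c (\<Sum>i<N. hc i x)" by (rule arg_cong[OF xs])
    then show "scale c x = (\<Sum>i<N. scale c (hc i x))" by (simp only: scale_sum_right)
  qed simp
qed

lemma hcomp_zero[simp]: "hc i 0 = 0" by (simp add: hcomp_homog)
lemma hcomp_neg: "hc i (- x) = - hc i x"
proof -
  have "hc i (- x) + hc i x = 0" using hcomp_add[of i "- x" x] by simp
  then show ?thesis by (simp add: eq_neg_iff_add_eq_0)
qed
lemma hcomp_diff: "hc i (x - y) = hc i x - hc i y"
  using hcomp_add[of i x "- y"] hcomp_neg[of i y] by simp
lemma hcomp_sumf: "hc i (sum f S) = (\<Sum>s\<in>S. hc i (f s))"
  by (induct S rule: infinite_finite_induct) (auto simp: hcomp_add)

lemma hcomp_mult: "hc k (x * y) = (\<Sum>i\<le>k. hc i x * hc (k - i) y)"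
proof -
  obtain N1 where N1: "\<forall>i\<ge>N1. hc i x = 0" using hcomp_bound by blast
  obtain N2 where N2: "\<forall>i\<ge>N2. hc i y = 0" using hcomp_bound by blast
  define N where "N = max N1 N2"
  have Nx: "\<forall>i\<ge>N. hc i x = 0" and Ny: "\<forall>i\<ge>N. hc i y = 0" using N1 N2 by (auto simp: N_def)
  let ?c = "\<lambda>k. (\<Sum>i\<le>k. hc i x * hc (k - i) y)"
  show ?thesis
  proof (rule hcomp_eq[where S="{..<N+N}"])
    show "?c i \<in> Agr i" for i
    proof (rule sum_Agr)
      fix j assume "j \<in> {..i}"
      then have "j + (i - j) = i" by simp
      then show "hc j x * hc (i - j) y \<in> Agr i" using mult_Agr[OF hcomp_in hcomp_in, of j x "i - j" y] by simp
    qed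
    show "?c k = 0" if "k \<notin> {..<N+N}" for k
    proof (rule sum.neutral, intro ballI)
      fix i assume "i \<in> {..k}"
      show "hc i x * hc (k - i) y = 0"
      proof (cases "i \<ge> N")
        case True then show ?thesis using Nx by simp
      next
        case False then have "k - i \<ge> N" using that by auto
        then show ?thesis using Ny by simp
      qed
    qed
    have "x * y = (\<Sum>i<N. hc i x) * (\<Sum>j<N. hc j y)"
      using Nx Ny hcomp_sum_lt by metis
    also have "\<dots> = (\<Sum>i<N. \<Sum>j<N. hc i x * hc j y)"
      by (rule sum_product)
    also have "\<dots> = (\<Sum>(i,j)\<in>{..<N} \<times> {..<N}. hc i x * hc j y)"
      by (simp add: sum.cartesian_product)
    also have "\<dots> = (\<Sum>(i,j)\<in>{(i,j). i + j < N + N}. hc i x * hc j y)"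
    proof (rule sum.mono_neutral_left)
      show "finite {(i, j). i + j < N + N}"
        by (rule finite_subset[of _ "{..<N+N} \<times> {..<N+N}"]) auto
      show "{..<N} \<times> {..<N} \<subseteq> {(i, j). i + j < N + N}" by auto
      show "\<forall>p\<in>{(i, j). i + j < N + N} - {..<N} \<times> {..<N}. (case p of (i,j) \<Rightarrow> hc i x * hc j y) = 0"
        using Nx Ny apply auto
         apply (metis mult_zero_left not_less)
        by (metis mult_zero_right not_less)
    qed
    also have "\<dots> = (\<Sum>k<N+N. ?c k)" by (rule sum.triangle_reindex)
    finally show "x * y = (\<Sum>k<N+N. ?c k)" .
  qed simp
qed

end

context GA begin

lemma span_bimult:
  assumes "x \<in> span S" "subspace W" "\<And>s. s \<in> S \<Longrightarrow> a * s * w \<in> W"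
  shows "a * x * w \<in> W"
  using assms(1)
proof (induct x rule: span_induct_alt)
  case base
  then show ?case using assms(2) by (simp add: subspace_0)
next
  case (step c s y)
  have "a * (scale c s + y) * w = a * scale c s * w + a * y * w"
    by (simp add: distrib_left distrib_right)
  also have "a * scale c s * w = scale c (a * s * w)"
    by (metis scale_mult_left scale_mult_right)
  finally have "a * (scale c s + y) * w = scale c (a * s * w) + a * y * w" .
  then show ?case using step assms by (simp add: subspace_add subspace_scale)
qed

lemma span_mult_left:
  assumes "x \<in> span S" "subspace W" "\<And>s. s \<in> S \<Longrightarrow> a * s \<in> W"
  shows "a * x \<in> W"
  using span_bimult[OF assms(1,2), of a 1] assms(3) by simp

lemma span_mult_right:
  assumes "x \<in> span S" "subspace W" "\<And>s. s \<in> S \<Longrightarrow> s * w \<in> W"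
  shows "x * w \<in> W"
  using span_bimult[OF assms(1,2), of 1 w] assms(3) by simp

lemma span_into:
  assumes "x \<in> span S" "subspace W" "S \<subseteq> W" shows "x \<in> W"
  using span_minimal assms by blast

abbreviation A0 where "A0 \<equiv> Agr 0"

lemma A0_mult: "a \<in> A0 \<Longrightarrow> b \<in> A0 \<Longrightarrow> a * b \<in> A0"
  using mult_Agr[of a 0 b 0] by simp
lemma mult_A0_left: "a \<in> A0 \<Longrightarrow> x \<in> Agr n \<Longrightarrow> a * x \<in> Agr n"
  using mult_Agr[of a 0 x n] by simp
lemma mult_A0_right: "x \<in> Agr n \<Longrightarrow> a \<in> A0 \<Longrightarrow> x * a \<in> Agr n"
  using mult_Agr[of x n a 0] by simp

lemma lideal_sub: "f \<in> A0 \<Longrightarrow> subspace (lideal A0 f)"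
  unfolding subspace_def lideal_def
proof (intro conjI allI ballI)
  show "0 \<in> {a * f |a. a \<in> A0}" by (rule CollectI, rule exI[of _ 0]) simp
next
  fix x y assume "x \<in> {a * f |a. a \<in> A0}" "y \<in> {a * f |a. a \<in> A0}"
  then obtain a b where "x = a * f" "y = b * f" "a \<in> A0" "b \<in> A0" by blast
  then show "x + y \<in> {a * f |a. a \<in> A0}"
    by (intro CollectI exI[of _ "a + b"]) (simp add: distrib_right add_Agr)
next
  fix c x assume "x \<in> {a * f |a. a \<in> A0}"
  then obtain a where "x = a * f" "a \<in> A0" by blast
  then show "scale c x \<in> {a * f |a. a \<in> A0}"
    by (intro CollectI exI[of _ "scale c a"]) (metis scale_mult_left scale_Agr)
qed

end

locale QH = GA scale Agr for scale :: "'k::field \<Rightarrow> 'a::ring_1 \<Rightarrow> 'a" and Agr +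
  fixes \<Lambda> :: "'l set" and R :: "('l \<times> 'l) set" and e :: "'l \<Rightarrow> 'a"
  assumes qh: "quasi_hereditary scale Agr \<Lambda> R e"
begin

abbreviation P where "P la \<equiv> lideal A0 (e la)"
abbreviation U where "U la \<equiv> std_tr scale A0 \<Lambda> R e la"
abbreviation V where "V mu \<equiv> costd_tr scale A0 \<Lambda> R e mu"

lemmas QQ = qh[unfolded quasi_hereditary_def Let_def]
lemma po: "partial_order_on \<Lambda> R" by (rule QQ[THEN conjunct1])
lemma e_prim: "la \<in> \<Lambda> \<Longrightarrow> prim_idem A0 (e la)"
  by (rule QQ[THEN conjunct2, THEN conjunct1, rule_format])
lemma e_orth: "la \<in> \<Lambda> \<Longrightarrow> mu \<in> \<Lambda> \<Longrightarrow> la \<noteq> mu \<Longrightarrow> e la * e mu = 0"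
  by (rule QQ[THEN conjunct2, THEN conjunct2, THEN conjunct1, rule_format])
lemma all_prim: "prim_idem A0 f \<Longrightarrow> \<exists>la\<in>\<Lambda>. liso A0 (lideal A0 f) (P la)"
  by (rule QQ[THEN conjunct2, THEN conjunct2, THEN conjunct2, THEN conjunct2, THEN conjunct1, rule_format])
lemma filt: "la \<in> \<Lambda> \<Longrightarrow> \<exists>(m::nat) K mu. K 0 = {0} \<and> K m = U la \<and>
        (\<forall>i\<le>m. lsub A0 (K i)) \<and>
        (\<forall>i<m. K i \<subseteq> K (Suc i) \<and> mu i \<in> \<Lambda> \<and> (la, mu i) \<in> R \<and> mu i \<noteq> la \<and>
               qiso A0 (K (Suc i)) (K i) (P (mu i)) (U (mu i)))"
  by (rule QQ[THEN conjunct2, THEN conjunct2, THEN conjunct2, THEN conjunct2, THEN conjunct2, THEN conjunct2, rule_format])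

lemma e_in: "la \<in> \<Lambda> \<Longrightarrow> e la \<in> A0" using e_prim unfolding prim_idem_def by blast
lemma e_idem: "la \<in> \<Lambda> \<Longrightarrow> e la * e la = e la" using e_prim unfolding prim_idem_def by blast
lemma e_nz: "la \<in> \<Lambda> \<Longrightarrow> e la \<noteq> 0" using e_prim unfolding prim_idem_def by blast

lemma R_refl: "la \<in> \<Lambda> \<Longrightarrow> (la, la) \<in> R"
  using po unfolding partial_order_on_def preorder_on_def refl_on_def by blast
lemma R_trans: "(a, b) \<in> R \<Longrightarrow> (b, c) \<in> R \<Longrightarrow> (a, c) \<in> R"
  using po unfolding partial_order_on_def preorder_on_def trans_def by blast
lemma R_antisym: "(a, b) \<in> R \<Longrightarrow> (b, a) \<in> R \<Longrightarrow> a = b"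
  using po unfolding partial_order_on_def antisym_def by blast

lemma U_sub: "subspace (U la)" unfolding std_tr_def by simp
lemma V_sub: "subspace (V la)" unfolding costd_tr_def by simp

lemma U_gen: "a \<in> A0 \<Longrightarrow> b \<in> A0 \<Longrightarrow> mu \<in> \<Lambda> \<Longrightarrow> (mu, la) \<notin> R \<Longrightarrow> a * e mu * b * e la \<in> U la"
  unfolding std_tr_def by (rule span_base) blast

lemma V_gen: "a \<in> A0 \<Longrightarrow> b \<in> A0 \<Longrightarrow> nu \<in> \<Lambda> \<Longrightarrow> (nu, mu) \<notin> R \<Longrightarrow> e mu * a * e nu * b \<in> V mu"
  unfolding costd_tr_def by (rule span_base) blast

lemma U3: "nu \<in> \<Lambda> \<Longrightarrow> (nu, la) \<notin> R \<Longrightarrow> a \<in> A0 \<Longrightarrow> e nu * a * e la \<in> U la"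
  using U_gen[of 1 a nu la] one_Agr by simp

lemma U_mult_left: assumes "a \<in> A0" "u \<in> U la" shows "a * u \<in> U la"
proof -
  have "a * u * 1 \<in> U la"
  proof (rule span_bimult[OF _ U_sub])
    show "u \<in> span {a * e mu * b * e la |a b mu. a \<in> A0 \<and> b \<in> A0 \<and> mu \<in> \<Lambda> \<and> (mu, la) \<notin> R}"
      using assms(2) unfolding std_tr_def .
  next
    fix s assume "s \<in> {a * e mu * b * e la |a b mu. a \<in> A0 \<and> b \<in> A0 \<and> mu \<in> \<Lambda> \<and> (mu, la) \<notin> R}"
    then obtain a' b mu where s: "s = a' * e mu * b * e la" "a' \<in> A0" "b \<in> A0" "mu \<in> \<Lambda>" "(mu, la) \<notin> R" by blast
    have "a * s * 1 = (a * a') * e mu * b * e la" by (simp add: s mult.assoc)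
    then show "a * s * 1 \<in> U la" using U_gen[OF A0_mult[OF assms(1) s(2)] s(3-5)] by simp
  qed
  then show ?thesis by simp
qed

lemma U_in_A0: assumes "u \<in> U la" "la \<in> \<Lambda>" shows "u \<in> A0"
proof (rule span_into[OF _ sub_Agr])
  show "u \<in> span {a * e mu * b * e la |a b mu. a \<in> A0 \<and> b \<in> A0 \<and> mu \<in> \<Lambda> \<and> (mu, la) \<notin> R}"
    using assms(1) unfolding std_tr_def .
  show "{a * e mu * b * e la |a b mu. a \<in> A0 \<and> b \<in> A0 \<and> mu \<in> \<Lambda> \<and> (mu, la) \<notin> R} \<subseteq> A0"
  proof (intro subsetI)
    fix s assume "s \<in> {a * e mu * b * e la |a b mu. a \<in> A0 \<and> b \<in> A0 \<and> mu \<in> \<Lambda> \<and> (mu, la) \<notin> R}"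
    then obtain a b mu where s: "s = a * e mu * b * e la" "a \<in> A0" "b \<in> A0" "mu \<in> \<Lambda>" "(mu, la) \<notin> R" by blast
    have "e la \<in> A0" using e_in assms(2) .
    then show "s \<in> A0" using s A0_mult e_in by metis
  qed
qed

lemma V_in_A0: assumes "v \<in> V mu" "mu \<in> \<Lambda>" shows "v \<in> A0"
proof (rule span_into[OF _ sub_Agr])
  show "v \<in> span {e mu * a * e nu * b |a b nu. a \<in> A0 \<and> b \<in> A0 \<and> nu \<in> \<Lambda> \<and> (nu, mu) \<notin> R}"
    using assms(1) unfolding costd_tr_def .
  show "{e mu * a * e nu * b |a b nu. a \<in> A0 \<and> b \<in> A0 \<and> nu \<in> \<Lambda> \<and> (nu, mu) \<notin> R} \<subseteq> A0"
  proof (intro subsetI)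
    fix s assume "s \<in> {e mu * a * e nu * b |a b nu. a \<in> A0 \<and> b \<in> A0 \<and> nu \<in> \<Lambda> \<and> (nu, mu) \<notin> R}"
    then obtain a b nu where s: "s = e mu * a * e nu * b" "a \<in> A0" "b \<in> A0" "nu \<in> \<Lambda>" by blast
    then show "s \<in> A0" using A0_mult e_in assms(2) by metis
  qed
qed

lemma U_idem: assumes "u \<in> U la" "la \<in> \<Lambda>" shows "u * e la = u"
proof -
  have sub: "subspace {x. x * e la = x}"
    unfolding subspace_def by (auto simp: distrib_right scale_mult_left[symmetric])
  have "u \<in> {x. x * e la = x}"
  proof (rule span_into[OF _ sub])
    show "u \<in> span {a * e mu * b * e la |a b mu. a \<in> A0 \<and> b \<in> A0 \<and> mu \<in> \<Lambda> \<and> (mu, la) \<notin> R}"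
      using assms(1) unfolding std_tr_def .
    show "{a * e mu * b * e la |a b mu. a \<in> A0 \<and> b \<in> A0 \<and> mu \<in> \<Lambda> \<and> (mu, la) \<notin> R} \<subseteq> {x. x * e la = x}"
      using e_idem[OF assms(2)] by (auto simp: mult.assoc)
  qed
  then show ?thesis by simp
qed

lemma V_idem: assumes "v \<in> V mu" "mu \<in> \<Lambda>" shows "e mu * v = v"
proof -
  have sub: "subspace {x. e mu * x = x}"
    unfolding subspace_def by (auto simp: distrib_left scale_mult_right[symmetric])
  have "v \<in> {x. e mu * x = x}"
  proof (rule span_into[OF _ sub])
    show "v \<in> span {e mu * a * e nu * b |a b nu. a \<in> A0 \<and> b \<in> A0 \<and> nu \<in> \<Lambda> \<and> (nu, mu) \<notin> R}"
      using assms(1) unfolding costd_tr_def .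
    show "{e mu * a * e nu * b |a b nu. a \<in> A0 \<and> b \<in> A0 \<and> nu \<in> \<Lambda> \<and> (nu, mu) \<notin> R} \<subseteq> {x. e mu * x = x}"
      using e_idem[OF assms(2)] by (auto simp: mult.assoc[symmetric])
  qed
  then show ?thesis by simp
qed

lemma V_mult_right: assumes "a \<in> A0" "v \<in> V mu" "mu \<in> \<Lambda>" shows "v * a \<in> V mu"
proof -
  have "1 * v * a \<in> V mu"
  proof (rule span_bimult[OF _ V_sub])
    show "v \<in> span {e mu * a * e nu * b |a b nu. a \<in> A0 \<and> b \<in> A0 \<and> nu \<in> \<Lambda> \<and> (nu, mu) \<notin> R}"
      using assms(2) unfolding costd_tr_def .
  next
    fix s assume "s \<in> {e mu * a * e nu * b |a b nu. a \<in> A0 \<and> b \<in> A0 \<and> nu \<in> \<Lambda> \<and> (nu, mu) \<notin> R}"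
    then obtain a' b nu where s: "s = e mu * a' * e nu * b" "a' \<in> A0" "b \<in> A0" "nu \<in> \<Lambda>" "(nu, mu) \<notin> R" by blast
    have "1 * s * a = e mu * a' * e nu * (b * a)" by (simp add: s mult.assoc)
    then show "1 * s * a \<in> V mu" using V_gen[OF s(2) A0_mult[OF s(3) assms(1)] s(4-5)] by simp
  qed
  then show ?thesis by simp
qed

lemma lsub_A0: "lsub A0 K \<Longrightarrow> k \<in> K \<Longrightarrow> k \<in> A0" unfolding lsub_def by blast
lemma lsub_add: "lsub A0 K \<Longrightarrow> x \<in> K \<Longrightarrow> y \<in> K \<Longrightarrow> x + y \<in> K" unfolding lsub_def by blast
lemma lsub_mult: "lsub A0 K \<Longrightarrow> a \<in> A0 \<Longrightarrow> x \<in> K \<Longrightarrow> a * x \<in> K" unfolding lsub_def by blast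
lemma lsub_0: "lsub A0 K \<Longrightarrow> 0 \<in> K" unfolding lsub_def by blast

lemma U_neg: "u \<in> U la \<Longrightarrow> - u \<in> U la" using U_sub subspace_neg by blast
lemma U_add: "u \<in> U la \<Longrightarrow> v \<in> U la \<Longrightarrow> u + v \<in> U la" using U_sub subspace_add by blast
lemma U_diff: "u \<in> U la \<Longrightarrow> v \<in> U la \<Longrightarrow> u - v \<in> U la" using U_sub subspace_diff by blast

lemma filt_step:
  assumes K': "lsub A0 K'" and q: "qiso A0 K' K (P s) (U s)" and s: "s \<in> \<Lambda>"
  shows "\<exists>\<kappa>\<in>K'. e s * \<kappa> = \<kappa> \<and> (\<forall>k\<in>K'. \<exists>b\<in>A0. k - b * \<kappa> \<in> K) \<and> (\<forall>u\<in>U s. u * \<kappa> \<in> K)"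
proof -
  obtain f where f1: "\<forall>x\<in>K'. f x \<in> P s"
    and f2: "\<forall>x\<in>K'. \<forall>y\<in>K'. f (x + y) - (f x + f y) \<in> U s"
    and f3: "\<forall>a\<in>A0. \<forall>x\<in>K'. f (a * x) - a * f x \<in> U s"
    and f4: "\<forall>x\<in>K'. f x \<in> U s \<longleftrightarrow> x \<in> K"
    and f5: "\<forall>x'\<in>P s. \<exists>x\<in>K'. x' - f x \<in> U s"
    using q unfolding qiso_def by blast
  have es: "e s \<in> A0" "e s * e s = e s" using e_in e_idem s by auto
  have eP: "e s \<in> P s" unfolding lideal_def using es by force
  obtain k0 where k0: "k0 \<in> K'" "e s - f k0 \<in> U s" using f5 eP by blast
  define \<kappa> where "\<kappa> = e s * k0"
  have kK: "\<kappa> \<in> K'" unfolding \<kappa>_def using lsub_mult[OF K' es(1) k0(1)] .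
  have ek: "e s * \<kappa> = \<kappa>" unfolding \<kappa>_def by (simp add: mult.assoc[symmetric] es(2))
  have k_A0: "\<kappa> \<in> A0" using lsub_A0[OF K' kK] .
  have t1: "f \<kappa> - e s * f k0 \<in> U s" using f3 es(1) k0(1) unfolding \<kappa>_def by blast
  have t2: "e s * (e s - f k0) \<in> U s" using U_mult_left[OF es(1) k0(2)] .
  have t2': "e s * (e s - f k0) = e s - e s * f k0" by (simp add: right_diff_distrib es(2))
  have delta: "f \<kappa> - e s \<in> U s"
  proof -
    have "(f \<kappa> - e s * f k0) - (e s - e s * f k0) = f \<kappa> - e s" by (simp add: algebra_simps)
    then have eq: "f \<kappa> - e s = (f \<kappa> - e s * f k0) - (e s * (e s - f k0))" by (simp only: t2')
    show ?thesis unfolding eq by (rule U_diff[OF t1 t2])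
  qed
  have part1: "\<forall>k\<in>K'. \<exists>b\<in>A0. k - b * \<kappa> \<in> K"
  proof
    fix k assume kK': "k \<in> K'"
    obtain b where b: "b \<in> A0" "f k = b * e s" using f1 kK' unfolding lideal_def by blast
    have nb: "- b \<in> A0" using b(1) neg_Agr by blast
    have bk: "(- b) * \<kappa> \<in> K'" using lsub_mult[OF K' nb kK] .
    define k' where "k' = k + (- b) * \<kappa>"
    have k'K': "k' \<in> K'" unfolding k'_def using lsub_add[OF K' kK' bk] .
    have g1: "f k' - (f k + f ((- b) * \<kappa>)) \<in> U s" using f2 kK' bk unfolding k'_def by blast
    have g2: "f ((- b) * \<kappa>) - (- b) * f \<kappa> \<in> U s" using f3 nb kK by blast
    have g3: "(- b) * (f \<kappa> - e s) \<in> U s" using U_mult_left[OF nb delta] .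
    have eq: "f k' = (f k' - (f k + f ((- b) * \<kappa>))) + (f ((- b) * \<kappa>) - (- b) * f \<kappa>) + (- b) * (f \<kappa> - e s)"
      by (simp add: b(2) algebra_simps)
    have "f k' \<in> U s" by (subst eq, rule U_add[OF U_add[OF g1 g2] g3])
    then have "k' \<in> K" using f4 k'K' by blast
    moreover have "k' = k - b * \<kappa>" unfolding k'_def by simp
    ultimately show "\<exists>b\<in>A0. k - b * \<kappa> \<in> K" using b(1) by blast
  qed
  have part2: "\<forall>u\<in>U s. u * \<kappa> \<in> K"
  proof
    fix u assume u: "u \<in> U s"
    have uA: "u \<in> A0" using U_in_A0[OF u s] .
    have ukK': "u * \<kappa> \<in> K'" using lsub_mult[OF K' uA kK] .
    have h1: "f (u * \<kappa>) - u * f \<kappa> \<in> U s" using f3 uA kK by blast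
    have h2: "u * (f \<kappa> - e s) \<in> U s" using U_mult_left[OF uA delta] .
    have h3: "u * e s = u" using U_idem[OF u s] .
    have eq: "f (u * \<kappa>) = (f (u * \<kappa>) - u * f \<kappa>) + u * (f \<kappa> - e s) + u"
      using h3 by (simp add: algebra_simps)
    have "f (u * \<kappa>) \<in> U s" by (subst eq, rule U_add[OF U_add[OF h1 h2] u])
    then show "u * \<kappa> \<in> K" using f4 ukK' by blast
  qed
  show ?thesis using kK ek part1 part2 by blast
qed

end

context QH begin

definition SF where "SF nu rho = span {c * e s * d | c d s. c \<in> A0 \<and> d \<in> A0 \<and> s \<in> \<Lambda> \<and> (nu, s) \<in> R \<and> (rho, s) \<in> R}"

lemma SF_sub: "subspace (SF nu rho)" unfolding SF_def by simp

lemma SF_gen: "c \<in> A0 \<Longrightarrow> d \<in> A0 \<Longrightarrow> s \<in> \<Lambda> \<Longrightarrow> (nu, s) \<in> R \<Longrightarrow> (rho, s) \<in> R \<Longrightarrow> c * e s * d \<in> SF nu rho"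
  unfolding SF_def by (rule span_base) blast

lemma factF:
  assumes nu: "nu \<in> \<Lambda>" and rho: "rho \<in> \<Lambda>" and a: "a \<in> A0"
  shows "e nu * a * e rho \<in> SF nu rho"
proof (cases "(nu, rho) \<in> R")
  case True
  have "e nu * a * e rho = (e nu * a) * e rho * 1" by simp
  then show ?thesis using SF_gen[OF A0_mult[OF e_in[OF nu] a] one_Agr rho True R_refl[OF rho]] by simp
next
  case False
  have xU: "e nu * a * e rho \<in> U rho" using U3[OF nu False a] .
  obtain m K mu where K0: "K 0 = {0}" and Km: "K m = U rho" and Kl: "\<forall>i\<le>m. lsub A0 (K i)"
    and Ks: "\<forall>i<m. K i \<subseteq> K (Suc i) \<and> mu i \<in> \<Lambda> \<and> (rho, mu i) \<in> R \<and> mu i \<noteq> rho \<and>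
               qiso A0 (K (Suc i)) (K i) (P (mu i)) (U (mu i))"
    using filt[OF rho] by blast
  have en: "e nu * e nu = e nu" "e nu \<in> A0" using e_idem[OF nu] e_in[OF nu] by auto
  have claim: "i \<le> m \<Longrightarrow> \<forall>k\<in>K i. e nu * k \<in> SF nu rho" for i
  proof (induct i)
    case 0
    then show ?case using K0 SF_sub subspace_0 by fastforce
  next
    case (Suc i)
    then have im: "i < m" by simp
    have IH: "\<forall>k\<in>K i. e nu * k \<in> SF nu rho" using Suc by simp
    define s where "s = mu i"
    have s: "s \<in> \<Lambda>" "(rho, s) \<in> R" "qiso A0 (K (Suc i)) (K i) (P s) (U s)"
      using Ks im unfolding s_def by auto
    have lK: "lsub A0 (K (Suc i))" using Kl Suc(2) by blast
    obtain \<kappa> where kK: "\<kappa> \<in> K (Suc i)" and ek: "e s * \<kappa> = \<kappa>"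
      and dec: "\<forall>k\<in>K (Suc i). \<exists>b\<in>A0. k - b * \<kappa> \<in> K i" and uk: "\<forall>u\<in>U s. u * \<kappa> \<in> K i"
      using filt_step[OF lK s(3) s(1)] by blast
    have kA: "\<kappa> \<in> A0" using lsub_A0[OF lK kK] .
    show ?case
    proof
      fix k assume k: "k \<in> K (Suc i)"
      obtain b where b: "b \<in> A0" "k - b * \<kappa> \<in> K i" using dec k by blast
      have t1: "e nu * (k - b * \<kappa>) \<in> SF nu rho" using IH b(2) by blast
      have t2: "e nu * b * e s * \<kappa> \<in> SF nu rho"
      proof (cases "(nu, s) \<in> R")
        case True
        then show ?thesis using SF_gen[OF A0_mult[OF en(2) b(1)] kA s(1) True s(2)] by simp
      next
        case False
        have w: "e nu * b * e s \<in> U s" using U3[OF nu False b(1)] .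
        have "e nu * b * e s * \<kappa> \<in> K i" using uk w by blast
        then have "e nu * (e nu * b * e s * \<kappa>) \<in> SF nu rho" using IH by blast
        moreover have "e nu * (e nu * b * e s * \<kappa>) = e nu * b * e s * \<kappa>"
          by (simp add: mult.assoc[symmetric] en(1))
        ultimately show ?thesis by simp
      qed
      have "e nu * k = e nu * (k - b * \<kappa>) + e nu * b * e s * \<kappa>"
        using ek by (simp add: algebra_simps mult.assoc)
      then show "e nu * k \<in> SF nu rho" using SF_sub t1 t2 subspace_add by metis
    qed
  qed
  have "e nu * (e nu * a * e rho) \<in> SF nu rho" using claim[OF order_refl] Km xU by blast
  moreover have "e nu * (e nu * a * e rho) = e nu * a * e rho" by (simp add: mult.assoc[symmetric] en(1))
  ultimately show ?thesis by simp
qed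

lemma e_inj: "inj_on e \<Lambda>"
proof (rule inj_onI)
  fix a b assume ab: "a \<in> \<Lambda>" "b \<in> \<Lambda>" "e a = e b"
  show "a = b"
  proof (rule ccontr)
    assume "a \<noteq> b"
    then have "e a * e b = 0" using e_orth ab by blast
    then have "e a = 0" using e_idem[OF ab(1)] ab(3) by simp
    then show False using e_nz[OF ab(1)] by simp
  qed
qed

lemma sub_zero: "subspace {0}" unfolding subspace_def by simp

lemma Lambda_finite: "finite \<Lambda>"
proof -
  obtain B where B: "finite B" "span B = UNIV" using fin_span by blast
  have ind: "independent (e ` \<Lambda>)"
    unfolding dependent_def
  proof
    assume "\<exists>a\<in>e ` \<Lambda>. a \<in> span (e ` \<Lambda> - {a})"
    then obtain nu where nu: "nu \<in> \<Lambda>" "e nu \<in> span (e ` \<Lambda> - {e nu})" by blast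
    have "e nu * e nu * 1 \<in> {0}"
    proof (rule span_bimult[OF nu(2) sub_zero])
      fix s assume "s \<in> e ` \<Lambda> - {e nu}"
      then obtain t where t: "t \<in> \<Lambda>" "s = e t" "e t \<noteq> e nu" by blast
      then have "t \<noteq> nu" by blast
      then show "e nu * s * 1 \<in> {0}" using e_orth[OF nu(1) t(1)] t(2) by simp
    qed
    then show False using e_idem[OF nu(1)] e_nz[OF nu(1)] by simp
  qed
  have "finite (e ` \<Lambda>)" using independent_span_bound[OF B(1) ind] B(2) by blast
  then show ?thesis using finite_imageD e_inj by blast
qed

definition J where "J = span {a * e nu * b | a b nu. a \<in> A0 \<and> b \<in> A0 \<and> nu \<in> \<Lambda>}"

lemma J_sub: "subspace J" unfolding J_def by simp
lemma J_gen: "a \<in> A0 \<Longrightarrow> b \<in> A0 \<Longrightarrow> nu \<in> \<Lambda> \<Longrightarrow> a * e nu * b \<in> J"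
  unfolding J_def by (rule span_base) blast

lemma prim_in_J: assumes f: "prim_idem A0 f" shows "f \<in> J"
proof -
  have fA: "f \<in> A0" "f * f = f" using f unfolding prim_idem_def by auto
  obtain la where la: "la \<in> \<Lambda>" and li: "liso A0 (lideal A0 f) (P la)" using all_prim[OF f] by blast
  obtain \<phi> where bij: "bij_betw \<phi> (lideal A0 f) (P la)"
    and lin: "\<forall>a\<in>A0. \<forall>x\<in>lideal A0 f. \<phi> (a * x) = a * \<phi> x"
    using li unfolding liso_def by blast
  have fL: "f \<in> lideal A0 f" unfolding lideal_def using fA by (metis (mono_tags, lifting) mem_Collect_eq)
  have pP: "\<phi> f \<in> P la" using bij fL bij_betwE by blast
  then obtain a1 where a1: "a1 \<in> A0" "\<phi> f = a1 * e la" unfolding lideal_def by blast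
  define p where "p = \<phi> f"
  have pA: "p \<in> A0" unfolding p_def a1(2) using A0_mult[OF a1(1) e_in[OF la]] .
  have pe: "p * e la = p" unfolding p_def a1(2) by (simp add: mult.assoc e_idem[OF la])
  have eP: "e la \<in> P la" unfolding lideal_def using e_in[OF la] e_idem[OF la] by (metis (mono_tags, lifting) mem_Collect_eq)
  obtain q where q: "q \<in> lideal A0 f" "\<phi> q = e la" using bij eP by (metis bij_betw_iff_bijections)
  obtain a2 where a2: "a2 \<in> A0" "q = a2 * f" using q(1) unfolding lideal_def by blast
  have qA: "q \<in> A0" using A0_mult[OF a2(1) fA(1)] a2(2) by simp
  have pq0: "p * q = (p * a2) * f" by (simp add: a2(2) mult.assoc)
  have pq: "p * q \<in> lideal A0 f" unfolding lideal_def pq0 using A0_mult[OF pA a2(1)] by blast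
  have "\<phi> (p * q) = p * e la" using lin pA q by simp
  also have "\<dots> = \<phi> f" using pe p_def by simp
  finally have "p * q = f" using bij pq fL unfolding bij_betw_def inj_on_def by blast
  then have "f = p * e la * q" using pe by simp
  then show ?thesis using J_gen[OF pA qA la] by simp
qed

lemma one_in_J: "1 \<in> J"
proof (rule ccontr)
  assume one: "1 \<notin> J"
  obtain B where B: "finite B" "span B = UNIV" using fin_span by blast
  obtain Bs where Bs: "Bs \<subseteq> B" "independent Bs" "B \<subseteq> span Bs" using maximal_independent_subset[of B] by blast
  have "span Bs = UNIV" using B(2) Bs(3) span_mono[OF Bs(3)] span_span by (metis top.extremum_uniqueI)
  then interpret FD: finite_dimensional_vector_space scale Bs
    using Bs B(1) finite_subset by unfold_locales auto
  define Q where "Q f \<longleftrightarrow> f \<in> A0 \<and> f * f = f \<and> f \<notin> J" for f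
  have Q1: "Q 1" unfolding Q_def using one one_Agr by simp
  obtain f where Qf: "Q f" and fmin: "\<forall>g. Q g \<longrightarrow> dim (lideal A0 f) \<le> dim (lideal A0 g)"
    using ex_has_least_nat[of Q 1 "\<lambda>f. dim (lideal A0 f)", OF Q1] by blast
  have fA: "f \<in> A0" "f * f = f" "f \<notin> J" using Qf unfolding Q_def by auto
  have fnz: "f \<noteq> 0" using fA(3) J_sub subspace_0 by blast
  have "\<not> prim_idem A0 f" using prim_in_J fA(3) by blast
  then obtain g h where gh: "g \<in> A0" "h \<in> A0" "g * g = g" "h * h = h" "g * h = 0" "h * g = 0"
    "g \<noteq> 0" "h \<noteq> 0" "f = g + h"
    using fA fnz unfolding prim_idem_def by blast
  have smaller: "dim (lideal A0 g') < dim (lideal A0 f)"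
    if g': "g' \<in> A0" "g' * f = g'" "f * h' = h'" "g' * h' = 0" "h' \<noteq> 0" for g' h'
  proof -
    have s1: "lideal A0 g' \<subseteq> lideal A0 f"
    proof
      fix x assume "x \<in> lideal A0 g'"
      then obtain a where a: "a \<in> A0" "x = a * g'" unfolding lideal_def by blast
      then have "x = (a * g') * f" using g'(2) by (simp add: mult.assoc)
      then show "x \<in> lideal A0 f" unfolding lideal_def using A0_mult[OF a(1) g'(1)] by blast
    qed
    have fL: "f \<in> lideal A0 f" unfolding lideal_def using fA by (metis (mono_tags, lifting) mem_Collect_eq)
    have fnL: "f \<notin> lideal A0 g'"
    proof
      assume "f \<in> lideal A0 g'"
      then obtain a where "f = a * g'" unfolding lideal_def by blast
      then have "f * h' = a * (g' * h')" by (simp add: mult.assoc)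
      then show False using g' by simp
    qed
    have e1: "span (lideal A0 g') = lideal A0 g'" using lideal_sub[OF g'(1)] by simp
    have e2: "span (lideal A0 f) = lideal A0 f" using lideal_sub[OF fA(1)] by simp
    have "span (lideal A0 g') \<subset> span (lideal A0 f)"
      unfolding e1 e2 using s1 fL fnL by blast
    then show ?thesis by (rule FD.dim_psubset)
  qed
  show False
  proof (cases "g \<in> J")
    case True
    then have hJ: "h \<notin> J"
    proof (intro notI)
      assume "h \<in> J"
      then have "g + h \<in> J" using True J_sub subspace_add by blast
      then show False using gh(9) fA(3) by simp
    qed
    have "Q h" unfolding Q_def using gh hJ by simp
    moreover have "dim (lideal A0 h) < dim (lideal A0 f)"
      by (rule smaller[of h g]) (use gh in \<open>simp_all add: distrib_left distrib_right\<close>)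
    ultimately show False using fmin by fastforce
  next
    case False
    have "Q g" unfolding Q_def using gh False by simp
    moreover have "dim (lideal A0 g) < dim (lideal A0 f)"
      by (rule smaller[of g h]) (use gh in \<open>simp_all add: distrib_left distrib_right\<close>)
    ultimately show False using fmin by fastforce
  qed
qed

lemma min_exists:
  assumes "finite \<Omega>" "\<Omega> \<subseteq> \<Lambda>" "\<Omega> \<noteq> {}"
  shows "\<exists>mu\<in>\<Omega>. \<forall>s\<in>\<Omega>. (s, mu) \<in> R \<longrightarrow> s = mu"
proof -
  obtain x where x: "x \<in> \<Omega>" using assms(3) by blast
  define m where "m y = card {s \<in> \<Omega>. (s, y) \<in> R}" for y
  obtain mu where mu: "mu \<in> \<Omega>" and mmin: "\<forall>y. y \<in> \<Omega> \<longrightarrow> m mu \<le> m y"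
    using ex_has_least_nat[of "\<lambda>y. y \<in> \<Omega>" x m] x by blast
  have "\<forall>s\<in>\<Omega>. (s, mu) \<in> R \<longrightarrow> s = mu"
  proof (intro ballI impI)
    fix s assume s: "s \<in> \<Omega>" "(s, mu) \<in> R"
    show "s = mu"
    proof (rule ccontr)
      assume ne: "s \<noteq> mu"
      have sub: "{t \<in> \<Omega>. (t, s) \<in> R} \<subseteq> {t \<in> \<Omega>. (t, mu) \<in> R}" using s R_trans by blast
      have "mu \<in> {t \<in> \<Omega>. (t, mu) \<in> R}" using mu R_refl assms(2) by blast
      moreover have "mu \<notin> {t \<in> \<Omega>. (t, s) \<in> R}" using R_antisym s(2) ne by blast
      ultimately have "{t \<in> \<Omega>. (t, s) \<in> R} \<subset> {t \<in> \<Omega>. (t, mu) \<in> R}" using sub by blast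
      then have "m s < m mu" unfolding m_def by (rule psubset_card_mono[rotated]) (use assms(1) in simp)
      then show False using mmin s(1) by fastforce
    qed
  qed
  then show ?thesis using mu by blast
qed

end

context QH begin

context
  fixes n :: nat and Bn :: "'a set"
  assumes Bn_sub: "subspace Bn" and Bn_deg: "Bn \<subseteq> Agr n"
    and Bn_left: "\<And>a x. a \<in> A0 \<Longrightarrow> x \<in> Bn \<Longrightarrow> a * x \<in> Bn"
    and Bn_right: "\<And>a x. a \<in> A0 \<Longrightarrow> x \<in> Bn \<Longrightarrow> x * a \<in> Bn"
    and notall: "\<not> Agr n \<subseteq> Bn"
begin

definition XU where "XU la = {x * u | x u. x \<in> Agr n \<and> u \<in> U la}"
definition VY where "VY mu = {v * y | v y. v \<in> V mu \<and> y \<in> Agr n}"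

lemma Bn_add: "x \<in> Bn \<Longrightarrow> y \<in> Bn \<Longrightarrow> x + y \<in> Bn" using Bn_sub subspace_add by blast

lemma step1: "\<exists>la\<in>\<Lambda>. \<exists>y\<in>Agr n. y * e la \<notin> span (Bn \<union> XU la)"
proof (rule ccontr)
  assume "\<not> ?thesis"
  then have H: "\<And>la y. la \<in> \<Lambda> \<Longrightarrow> y \<in> Agr n \<Longrightarrow> y * e la \<in> span (Bn \<union> XU la)" by blast
  have C1: "x * u \<in> Bn" if la: "la \<in> \<Lambda>" and x: "x \<in> Agr n" and u: "u \<in> U la" for la x u
  proof -
    obtain m K mu where K0: "K 0 = {0}" and Km: "K m = U la" and Kl: "\<forall>i\<le>m. lsub A0 (K i)"
      and Ks: "\<forall>i<m. K i \<subseteq> K (Suc i) \<and> mu i \<in> \<Lambda> \<and> (la, mu i) \<in> R \<and> mu i \<noteq> la \<and>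
               qiso A0 (K (Suc i)) (K i) (P (mu i)) (U (mu i))"
      using filt[OF la] by blast
    have claim: "i \<le> m \<Longrightarrow> \<forall>x\<in>Agr n. \<forall>k\<in>K i. x * k \<in> Bn" for i
    proof (induct i)
      case 0
      then show ?case using K0 Bn_sub subspace_0 by fastforce
    next
      case (Suc i)
      then have im: "i < m" by simp
      have IH: "\<forall>x\<in>Agr n. \<forall>k\<in>K i. x * k \<in> Bn" using Suc by simp
      define s where "s = mu i"
      have s: "s \<in> \<Lambda>" "qiso A0 (K (Suc i)) (K i) (P s) (U s)"
        using Ks im unfolding s_def by auto
      have lK: "lsub A0 (K (Suc i))" using Kl Suc(2) by blast
      obtain \<kappa> where kK: "\<kappa> \<in> K (Suc i)" and ek: "e s * \<kappa> = \<kappa>"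
        and dec: "\<forall>k\<in>K (Suc i). \<exists>b\<in>A0. k - b * \<kappa> \<in> K i" and uk: "\<forall>u\<in>U s. u * \<kappa> \<in> K i"
        using filt_step[OF lK s(2) s(1)] by blast
      have kA: "\<kappa> \<in> A0" using lsub_A0[OF lK kK] .
      show ?case
      proof (intro ballI)
        fix x k assume x: "x \<in> Agr n" and k: "k \<in> K (Suc i)"
        obtain b where b: "b \<in> A0" "k - b * \<kappa> \<in> K i" using dec k by blast
        have t1: "x * (k - b * \<kappa>) \<in> Bn" using IH b(2) x by blast
        have y: "x * b \<in> Agr n" using mult_A0_right[OF x b(1)] .
        have "x * b * e s * \<kappa> \<in> Bn"
        proof (rule span_mult_right[OF H[OF s(1) y] Bn_sub])
          fix z assume "z \<in> Bn \<union> XU s"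
          then show "z * \<kappa> \<in> Bn"
          proof
            assume "z \<in> Bn" then show ?thesis using Bn_right kA by blast
          next
            assume "z \<in> XU s"
            then obtain x' u' where z: "z = x' * u'" "x' \<in> Agr n" "u' \<in> U s" unfolding XU_def by blast
            have "u' * \<kappa> \<in> K i" using uk z(3) by blast
            then have "x' * (u' * \<kappa>) \<in> Bn" using IH z(2) by blast
            then show ?thesis using z(1) by (simp add: mult.assoc)
          qed
        qed
        moreover have "x * k = x * (k - b * \<kappa>) + x * b * e s * \<kappa>"
        proof -
          have e1: "x * b * e s * \<kappa> = x * b * \<kappa>" using ek by (simp add: mult.assoc)
          show ?thesis unfolding e1 by (simp add: algebra_simps)
        qed
        ultimately show "x * k \<in> Bn" using t1 Bn_add by metis
      qed
    qed
    show ?thesis using claim[OF order_refl] Km x u by blast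
  qed
  have C2: "y * e la \<in> Bn" if la: "la \<in> \<Lambda>" and y: "y \<in> Agr n" for la y
  proof (rule span_into[OF H[OF la y] Bn_sub])
    show "Bn \<union> XU la \<subseteq> Bn" using C1 la unfolding XU_def by blast
  qed
  have "Agr n \<subseteq> Bn"
  proof
    fix y assume y: "y \<in> Agr n"
    have "y * 1 * 1 \<in> Bn"
    proof (rule span_bimult[OF one_in_J[unfolded J_def] Bn_sub])
      fix s assume "s \<in> {a * e nu * b |a b nu. a \<in> A0 \<and> b \<in> A0 \<and> nu \<in> \<Lambda>}"
      then obtain a b nu where s: "s = a * e nu * b" "a \<in> A0" "b \<in> A0" "nu \<in> \<Lambda>" by blast
      have "(y * a) * e nu \<in> Bn" using C2[OF s(4) mult_A0_right[OF y s(2)]] .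
      then have "(y * a) * e nu * b \<in> Bn" using Bn_right s(3) by blast
      then show "y * s * 1 \<in> Bn" using s(1) by (simp add: mult.assoc)
    qed
    then show "y \<in> Bn" by simp
  qed
  then show False using notall by blast
qed

lemma step2:
  assumes la: "la \<in> \<Lambda>" and y1: "y1 \<in> Agr n" and y1n: "y1 * e la \<notin> span (Bn \<union> XU la)"
  shows "\<exists>mu\<in>\<Lambda>. \<exists>y. y \<in> Agr n \<and> y * e la = y \<and> e mu * y \<notin> span (Bn \<union> XU la \<union> VY mu)"
proof (rule ccontr)
  assume nt: "\<not> ?thesis"
  have H: "e mu * y \<in> span (Bn \<union> XU la \<union> VY mu)" if "mu \<in> \<Lambda>" "y \<in> Agr n" "y * e la = y" for mu y
    using nt that by auto
  define Y where "Y = {y. y \<in> Agr n \<and> y * e la = y}"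
  define G where "G \<Omega> = {a * e s * y | a s y. a \<in> A0 \<and> s \<in> \<Omega> \<and> y \<in> Y}" for \<Omega>
  define Prop where "Prop \<Omega> \<longleftrightarrow> (\<forall>y\<in>Y. y \<in> span (Bn \<union> XU la \<union> G \<Omega>))" for \<Omega>
  have ela: "e la * e la = e la" "e la \<in> A0" using e_idem[OF la] e_in[OF la] by auto
  have Ymult: "a * y \<in> Y" if "a \<in> A0" "y \<in> Y" for a y
    using that mult_A0_left unfolding Y_def by (auto simp: mult.assoc)
  have Yr: "y * e la \<in> Y" if "y \<in> Agr n" for y
    using that mult_A0_right[OF that ela(2)] ela(1) unfolding Y_def by (simp add: mult.assoc)
  have PL: "Prop \<Lambda>"
    unfolding Prop_def
  proof
    fix y assume y: "y \<in> Y"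
    have "1 * 1 * y \<in> span (Bn \<union> XU la \<union> G \<Lambda>)"
    proof (rule span_bimult[OF one_in_J[unfolded J_def] subspace_span])
      fix s assume "s \<in> {a * e nu * b |a b nu. a \<in> A0 \<and> b \<in> A0 \<and> nu \<in> \<Lambda>}"
      then obtain a b nu where s: "s = a * e nu * b" "a \<in> A0" "b \<in> A0" "nu \<in> \<Lambda>" by blast
      have g: "a * e nu * (b * y) \<in> G \<Lambda>" unfolding G_def using s(2) s(4) Ymult[OF s(3) y] by blast
      have eq: "1 * s * y = a * e nu * (b * y)" by (simp add: s(1) mult.assoc)
      have "a * e nu * (b * y) \<in> span (Bn \<union> XU la \<union> G \<Lambda>)" by (rule span_base) (use g in blast)
      then show "1 * s * y \<in> span (Bn \<union> XU la \<union> G \<Lambda>)" unfolding eq .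
    qed
    then show "y \<in> span (Bn \<union> XU la \<union> G \<Lambda>)" by simp
  qed
  have PS: "Prop (\<Omega> - {mu})"
    if Om: "\<Omega> \<subseteq> \<Lambda>" and up: "\<forall>s\<in>\<Omega>. \<forall>t\<in>\<Lambda>. (s, t) \<in> R \<longrightarrow> t \<in> \<Omega>"
      and mu: "mu \<in> \<Omega>" and mumin: "\<forall>s\<in>\<Omega>. (s, mu) \<in> R \<longrightarrow> s = mu" and PO: "Prop \<Omega>" for \<Omega> mu
  proof -
    define W where "W = span (Bn \<union> XU la \<union> G (\<Omega> - {mu}))"
    have Wsub: "subspace W" unfolding W_def by simp
    have muL: "mu \<in> \<Lambda>" using Om mu by blast
    have allW: "Bn \<union> XU la \<union> G (\<Omega> - {mu}) \<subseteq> W" unfolding W_def by (rule span_superset)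
    have BW: "Bn \<subseteq> W" using allW by (simp only: Un_subset_iff)
    have XW: "XU la \<subseteq> W" using allW by (simp only: Un_subset_iff)
    have GW: "G (\<Omega> - {mu}) \<subseteq> W" using allW by (simp only: Un_subset_iff)
    have VYW: "a * v * y \<in> W" if a: "a \<in> A0" and v: "v \<in> V mu" and y: "y \<in> Y" for a v y
    proof (rule span_bimult[OF v[unfolded costd_tr_def] Wsub])
      fix s assume "s \<in> {e mu * a * e nu * b |a b nu. a \<in> A0 \<and> b \<in> A0 \<and> nu \<in> \<Lambda> \<and> (nu, mu) \<notin> R}"
      then obtain c d nu where s: "s = e mu * c * e nu * d" "c \<in> A0" "d \<in> A0" "nu \<in> \<Lambda>" "(nu, mu) \<notin> R"
        by blast
      have F: "e mu * c * e nu \<in> SF mu nu" using factF[OF muL s(4) s(2)] .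
      have "a * (e mu * c * e nu) * (d * y) \<in> W"
      proof (rule span_bimult[OF F[unfolded SF_def] Wsub])
        fix t assume "t \<in> {c * e s * d |c d s. c \<in> A0 \<and> d \<in> A0 \<and> s \<in> \<Lambda> \<and> (mu, s) \<in> R \<and> (nu, s) \<in> R}"
        then obtain c' d' s' where t: "t = c' * e s' * d'" "c' \<in> A0" "d' \<in> A0" "s' \<in> \<Lambda>" "(mu, s') \<in> R" "(nu, s') \<in> R"
          by blast
        have s'O: "s' \<in> \<Omega> - {mu}" using up mu t(4,5,6) s(5) by blast
        have "(a * c') * e s' * (d' * (d * y)) \<in> G (\<Omega> - {mu})"
          unfolding G_def using A0_mult[OF a t(2)] s'O Ymult[OF t(3) Ymult[OF s(3) y]] by blast
        moreover have "a * t * (d * y) = (a * c') * e s' * (d' * (d * y))" using t(1) by (simp add: mult.assoc)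
        ultimately show "a * t * (d * y) \<in> W" using GW by auto
      qed
      moreover have "a * s * y = a * (e mu * c * e nu) * (d * y)" using s(1) by (simp add: mult.assoc)
      ultimately show "a * s * y \<in> W" by simp
    qed
    have gens: "Bn \<union> XU la \<union> G \<Omega> \<subseteq> W"
    proof
      fix g assume g: "g \<in> Bn \<union> XU la \<union> G \<Omega>"
      show "g \<in> W"
      proof (cases "g \<in> Bn \<union> XU la")
        case True then show ?thesis using BW XW by blast
      next
        case False
        then have "g \<in> G \<Omega>" using g by blast
        then obtain a s y where g': "g = a * e s * y" "a \<in> A0" "s \<in> \<Omega>" "y \<in> Y" unfolding G_def by blast
        show ?thesis
        proof (cases "s = mu")
          case False
          then have "g \<in> G (\<Omega> - {mu})" unfolding G_def using g' by blast
          then show ?thesis using GW by blast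
        next
          case True
          have yY: "y \<in> Agr n" "y * e la = y" using g'(4) unfolding Y_def by auto
          have emy: "e mu * y \<in> span (Bn \<union> XU la \<union> VY mu)" using H[OF muL yY] .
          have "a * (e mu * y) * e la \<in> W"
          proof (rule span_bimult[OF emy Wsub])
            fix z assume z: "z \<in> Bn \<union> XU la \<union> VY mu"
            show "a * z * e la \<in> W"
            proof (cases "z \<in> Bn")
              case True
              then show ?thesis using Bn_left[OF g'(2)] Bn_right[OF ela(2)] BW by blast
            next
              case zB: False
              show ?thesis
              proof (cases "z \<in> XU la")
                case True
                then obtain x u where xu: "z = x * u" "x \<in> Agr n" "u \<in> U la" unfolding XU_def by blast
                have "a * z * e la = (a * x) * u" using xu U_idem[OF xu(3) la] by (simp add: mult.assoc)
                moreover have "(a * x) * u \<in> XU la" unfolding XU_def using mult_A0_left[OF g'(2) xu(2)] xu(3) by blast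
                ultimately show ?thesis using XW by auto
              next
                case False
                then have "z \<in> VY mu" using z zB by blast
                then obtain v y' where vy: "z = v * y'" "v \<in> V mu" "y' \<in> Agr n" unfolding VY_def by blast
                have "a * v * (y' * e la) \<in> W" using VYW[OF g'(2) vy(2) Yr[OF vy(3)]] .
                then show ?thesis using vy(1) by (simp add: mult.assoc)
              qed
            qed
          qed
          moreover have "a * (e mu * y) * e la = g" using g'(1) True yY(2) by (simp add: mult.assoc)
          ultimately show ?thesis by simp
        qed
      qed
    qed
    show ?thesis
      unfolding Prop_def
    proof
      fix y assume "y \<in> Y"
      then have "y \<in> span (Bn \<union> XU la \<union> G \<Omega>)" using PO unfolding Prop_def by blast
      then have "y \<in> W" by (rule span_into[OF _ Wsub gens])
      then show "y \<in> span (Bn \<union> XU la \<union> G (\<Omega> - {mu}))" unfolding W_def .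
    qed
  qed
  define UpP where "UpP \<Omega> \<longleftrightarrow> \<Omega> \<subseteq> \<Lambda> \<and> (\<forall>s\<in>\<Omega>. \<forall>t\<in>\<Lambda>. (s, t) \<in> R \<longrightarrow> t \<in> \<Omega>)" for \<Omega>
  have ind: "\<And>\<Omega>. UpP \<Omega> \<Longrightarrow> card \<Omega> = k \<Longrightarrow> Prop \<Omega> \<Longrightarrow> Prop {}" for k
  proof (induct k)
    case 0
    fix \<Omega> assume A: "UpP \<Omega>" "card \<Omega> = 0" "Prop \<Omega>"
    have "finite \<Omega>" using A(1) Lambda_finite finite_subset unfolding UpP_def by blast
    then have "\<Omega> = {}" using A(2) by simp
    then show "Prop {}" using A(3) by simp
  next
    case (Suc k)
    fix \<Omega> assume A: "UpP \<Omega>" "card \<Omega> = Suc k" "Prop \<Omega>"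
    have Om: "\<Omega> \<subseteq> \<Lambda>" and up: "\<forall>s\<in>\<Omega>. \<forall>t\<in>\<Lambda>. (s, t) \<in> R \<longrightarrow> t \<in> \<Omega>"
      using A(1) unfolding UpP_def by auto
    have fin: "finite \<Omega>" using Om Lambda_finite finite_subset by blast
    have ne: "\<Omega> \<noteq> {}" using A(2) by auto
    obtain mu where mu: "mu \<in> \<Omega>" and mumin: "\<forall>s\<in>\<Omega>. (s, mu) \<in> R \<longrightarrow> s = mu"
      using min_exists[OF fin Om ne] by blast
    have up': "\<forall>s\<in>\<Omega> - {mu}. \<forall>t\<in>\<Lambda>. (s, t) \<in> R \<longrightarrow> t \<in> \<Omega> - {mu}"
    proof (intro ballI impI)
      fix s t assume s: "s \<in> \<Omega> - {mu}" and t: "t \<in> \<Lambda>" and st: "(s, t) \<in> R"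
      have sO: "s \<in> \<Omega>" "s \<noteq> mu" using s by auto
      have "t \<in> \<Omega>" using up sO(1) t st by blast
      moreover have "t \<noteq> mu"
      proof
        assume "t = mu"
        then have "(s, mu) \<in> R" using st by simp
        then show False using mumin sO by blast
      qed
      ultimately show "t \<in> \<Omega> - {mu}" by blast
    qed
    have P1: "Prop (\<Omega> - {mu})" by (rule PS[OF Om up mu mumin A(3)])
    have U1: "UpP (\<Omega> - {mu})" unfolding UpP_def using Om up' by blast
    have C1: "card (\<Omega> - {mu}) = k" using A(2) mu fin by simp
    show "Prop {}" by (rule Suc(1)[OF U1 C1 P1])
  qed
  have UL: "UpP \<Lambda>" unfolding UpP_def by blast
  have P0: "Prop {}" by (rule ind[OF UL refl PL])
  have Ge: "G {} = {}" unfolding G_def by blast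
  have "y1 * e la \<in> Y" using Yr[OF y1] .
  then have "y1 * e la \<in> span (Bn \<union> XU la \<union> G {})" using P0 unfolding Prop_def by blast
  then have "y1 * e la \<in> span (Bn \<union> XU la)" unfolding Ge by simp
  then show False using y1n by simp
qed

lemma core: "\<exists>la\<in>\<Lambda>. \<exists>mu\<in>\<Lambda>. \<exists>y. y \<in> Agr n \<and> y * e la = y \<and> e mu * y \<notin> span (Bn \<union> XU la \<union> VY mu)"
  using step1 step2 by blast

end
end

lemma field_vs: "vector_space ((*) :: 'k::field \<Rightarrow> 'k \<Rightarrow> 'k)"
  by unfold_locales (auto simp: algebra_simps)

context GA begin

lemma sep_functional:
  assumes T: "subspace T" and w: "w \<notin> T"
  shows "\<exists>\<theta> :: 'a \<Rightarrow> 'k. (\<forall>x y. \<theta> (x + y) = \<theta> x + \<theta> y) \<and> (\<forall>c x. \<theta> (scale c x) = c * \<theta> x) \<and>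
           (\<forall>x\<in>T. \<theta> x = 0) \<and> \<theta> w = 1"
proof -
  obtain BT where BT: "BT \<subseteq> T" "independent BT" "T \<subseteq> span BT"
    using maximal_independent_subset[of T] by blast
  have spT: "span BT = T" using BT span_minimal[OF BT(1) T] by blast
  have ind: "independent (insert w BT)" using independent_insertI[OF _ BT(2)] w spT by simp
  interpret VP: vector_space_pair scale "(*) :: 'k \<Rightarrow> 'k \<Rightarrow> 'k"
    by (intro vector_space_pair.intro VS field_vs)
  obtain g where g: "Vector_Spaces.linear scale (*) g" "\<forall>x\<in>insert w BT. g x = (if x = w then 1 else 0)"
    using VP.linear_independent_extend[OF ind, of "\<lambda>x. if x = w then (1::'k) else 0"] by blast
  have add: "\<forall>x y. g (x + y) = g x + g y" and sc: "\<forall>c x. g (scale c x) = c * g x"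
    using g(1) unfolding Vector_Spaces.linear_iff by auto
  have van: "\<forall>x\<in>T. g x = 0"
  proof
    fix x assume "x \<in> T"
    then have "x \<in> span BT" using spT by simp
    then show "g x = 0"
    proof (induct x rule: span_induct_alt)
      case base
      have "g 0 = g (scale 0 0)" by simp
      also have "\<dots> = 0 * g 0" using sc by blast
      finally show ?case by simp
    next
      case (step c s y)
      have "s \<noteq> w" using step(1) BT(1) w by blast
      then have "g s = 0" using g(2) step(1) by simp
      then show ?case using add sc step(2) by simp
    qed
  qed
  show ?thesis using add sc van g(2) by (intro exI[of _ g]) auto
qed

abbreviation B where "B \<equiv> alg_gen scale (Agr 0 \<union> Agr 1)"

lemma B_0: "0 \<in> B"
proof -
  have "scale 0 1 \<in> B" by (rule alg_gen.smult[OF alg_gen.one])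
  then show ?thesis by simp
qed
lemma B_add: "x \<in> B \<Longrightarrow> y \<in> B \<Longrightarrow> x + y \<in> B" by (rule alg_gen.add)
lemma B_mult: "x \<in> B \<Longrightarrow> y \<in> B \<Longrightarrow> x * y \<in> B" by (rule alg_gen.mult)
lemma B_scale: "x \<in> B \<Longrightarrow> scale c x \<in> B" by (rule alg_gen.smult)
lemma B_A0: "x \<in> A0 \<Longrightarrow> x \<in> B" by (rule alg_gen.base) simp
lemma B_A1: "x \<in> Agr 1 \<Longrightarrow> x \<in> B" by (rule alg_gen.base) simp
lemma B_sum: "(\<And>i. i \<in> S \<Longrightarrow> f i \<in> B) \<Longrightarrow> sum f S \<in> B"
proof (induct S rule: infinite_finite_induct)
  case (infinite A)
  then show ?case using B_0 by (metis sum.infinite)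
next
  case empty
  then show ?case using B_0 by (metis sum.empty)
next
  case (insert x F)
  have "f x \<in> B" using insert by blast
  moreover have "sum f F \<in> B" using insert by blast
  ultimately show ?case using insert(1,2) B_add by (metis sum.insert)
qed
lemma B_sub: "subspace B"
  unfolding subspace_def using B_0 B_add B_scale by blast

lemma B_all: assumes "\<And>i. Agr i \<subseteq> B" shows "B = UNIV"
proof -
  have "x \<in> B" for x
  proof -
    obtain N where N: "\<forall>i\<ge>N. hc i x = 0" using hcomp_bound by blast
    have "(\<Sum>i<N. hc i x) \<in> B" proof (rule B_sum)
      fix i show "hc i x \<in> B" using assms[of i] hcomp_in by blast
    qed
    then show ?thesis using hcomp_sum_lt[OF N] by simp
  qed
  then show ?thesis by blast
qed

lemma hc0_mult: "hc 0 (x * y) = hc 0 x * hc 0 y"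
  by (simp add: hcomp_mult)

lemma hcn_mult:
  assumes n: "2 \<le> n" and low: "\<And>i. i < n \<Longrightarrow> Agr i \<subseteq> B"
  shows "hc n (x * y) - (hc 0 x * hc n y + hc n x * hc 0 y) \<in> B \<inter> Agr n"
proof -
  let ?f = "\<lambda>i. hc i x * hc (n - i) y"
  have dec: "{..n} = insert 0 (insert n {1..<n})" using n by auto
  have "hc n (x * y) = (\<Sum>i\<in>insert 0 (insert n {1..<n}). ?f i)" by (simp add: hcomp_mult dec)
  also have "\<dots> = ?f 0 + (?f n + (\<Sum>i\<in>{1..<n}. ?f i))" using n by (simp add: sum.insert)
  finally have eq: "hc n (x * y) - (hc 0 x * hc n y + hc n x * hc 0 y) = (\<Sum>i\<in>{1..<n}. ?f i)"
    by (simp add: algebra_simps)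
  have "(\<Sum>i\<in>{1..<n}. ?f i) \<in> B"
  proof (rule B_sum)
    fix i assume i: "i \<in> {1..<n}"
    have i1: "i < n" "n - i < n" using i by auto
    have "hc i x \<in> B" using low[OF i1(1)] hcomp_in by blast
    moreover have "hc (n - i) y \<in> B" using low[OF i1(2)] hcomp_in by blast
    ultimately show "?f i \<in> B" by (rule B_mult)
  qed
  moreover have "(\<Sum>i\<in>{1..<n}. ?f i) \<in> Agr n"
  proof (rule sum_Agr)
    fix i assume "i \<in> {1..<n}"
    then have "i + (n - i) = n" by simp
    then show "?f i \<in> Agr n" using mult_Agr[OF hcomp_in hcomp_in, of i x "n - i" y] by simp
  qed
  ultimately show ?thesis unfolding eq by blast
qed

lemma exists_n:
  assumes "B \<noteq> UNIV"
  shows "\<exists>n. 2 \<le> n \<and> (\<forall>i<n. Agr i \<subseteq> B) \<and> \<not> Agr n \<subseteq> B"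
proof -
  have ex: "\<exists>i. \<not> Agr i \<subseteq> B" using B_all assms by blast
  define n where "n = (LEAST i. \<not> Agr i \<subseteq> B)"
  have nB: "\<not> Agr n \<subseteq> B" unfolding n_def using LeastI_ex[OF ex] .
  have low: "\<forall>i<n. Agr i \<subseteq> B" unfolding n_def using not_less_Least by blast
  have "n \<noteq> 0"
  proof
    assume "n = 0" then show False using nB B_A0 by blast
  qed
  moreover have "n \<noteq> 1"
  proof
    assume "n = 1" then show False using nB B_A1 by blast
  qed
  ultimately have "2 \<le> n" by linarith
  then show ?thesis using nB low by blast
qed

end

context QH begin

definition cos where "cos la x = (\<lambda>u. x + u) ` U la"
definition rep :: "'a set \<Rightarrow> 'a" where "rep X = (SOME x. x \<in> X)"

lemma U0: "0 \<in> U la" using U_sub subspace_0 by blast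

lemma cos_mem: "y \<in> cos la x \<longleftrightarrow> y - x \<in> U la"
proof
  assume "y \<in> cos la x"
  then obtain u where "u \<in> U la" "y = x + u" unfolding cos_def by blast
  then show "y - x \<in> U la" by simp
next
  assume "y - x \<in> U la"
  moreover have "y = x + (y - x)" by simp
  ultimately show "y \<in> cos la x" unfolding cos_def by blast
qed

lemma cos_self: "x \<in> cos la x" using cos_mem U0 by simp

lemma cos_eq: "cos la x = cos la y \<longleftrightarrow> x - y \<in> U la"
proof
  assume "cos la x = cos la y"
  then have "x \<in> cos la y" using cos_self by blast
  then show "x - y \<in> U la" using cos_mem by blast
next
  assume xy: "x - y \<in> U la"
  show "cos la x = cos la y"
  proof (intro set_eqI)
    fix z
    have "z - y = (z - x) + (x - y)" "z - x = (z - y) - (x - y)" by simp_all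
    then show "z \<in> cos la x \<longleftrightarrow> z \<in> cos la y" unfolding cos_mem using xy U_add U_diff by metis
  qed
qed

lemma cos_add: "{a + b |a b. a \<in> cos la x \<and> b \<in> cos la y} = cos la (x + y)"
proof (intro set_eqI iffI)
  fix z assume "z \<in> {a + b |a b. a \<in> cos la x \<and> b \<in> cos la y}"
  then obtain a b where ab: "z = a + b" "a - x \<in> U la" "b - y \<in> U la" unfolding cos_mem by blast
  have eq: "z - (x + y) = (a - x) + (b - y)" using ab(1) by simp
  show "z \<in> cos la (x + y)" unfolding cos_mem eq by (rule U_add[OF ab(2,3)])
next
  fix z assume "z \<in> cos la (x + y)"
  then have "z - x - y \<in> U la" unfolding cos_mem by (simp add: algebra_simps)
  moreover have "z = x + (z - x)" by simp
  moreover have "(z - x) - y = z - x - y" by simp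
  ultimately show "z \<in> {a + b |a b. a \<in> cos la x \<and> b \<in> cos la y}"
    using cos_self cos_mem by blast
qed

lemma cos_act:
  assumes c: "c \<in> A0"
  shows "{c * a + u |a u. a \<in> cos la x \<and> u \<in> U la} = cos la (c * x)"
proof (intro set_eqI iffI)
  fix z assume "z \<in> {c * a + u |a u. a \<in> cos la x \<and> u \<in> U la}"
  then obtain a u where au: "z = c * a + u" "a - x \<in> U la" "u \<in> U la" unfolding cos_mem by blast
  have "z - c * x = c * (a - x) + u" using au(1) by (simp add: algebra_simps)
  then show "z \<in> cos la (c * x)" unfolding cos_mem using U_add[OF U_mult_left[OF c au(2)] au(3)] by simp
next
  fix z assume "z \<in> cos la (c * x)"
  then have "z - c * x \<in> U la" unfolding cos_mem .
  moreover have "z = c * x + (z - c * x)" by simp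
  ultimately show "z \<in> {c * a + u |a u. a \<in> cos la x \<and> u \<in> U la}"
    using cos_self by blast
qed

lemma cos_rep: "rep (cos la x) - x \<in> U la"
proof -
  have "rep (cos la x) \<in> cos la x" unfolding rep_def using cos_self by (rule someI)
  then show ?thesis using cos_mem by blast
qed

lemma cos0: "cos la 0 = U la"
  unfolding cos_def by simp

lemma P_A0: "la \<in> \<Lambda> \<Longrightarrow> x \<in> P la \<Longrightarrow> x \<in> A0"
  unfolding lideal_def using A0_mult e_in by blast

lemma P_sub: "la \<in> \<Lambda> \<Longrightarrow> subspace (P la)" using lideal_sub e_in by blast

lemma P_idem: "la \<in> \<Lambda> \<Longrightarrow> x \<in> P la \<Longrightarrow> x * e la = x"
  unfolding lideal_def using e_idem by (auto simp: mult.assoc)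

lemma U_P: "la \<in> \<Lambda> \<Longrightarrow> u \<in> U la \<Longrightarrow> u \<in> P la"
  unfolding lideal_def using U_in_A0 U_idem by (metis (mono_tags, lifting) mem_Collect_eq)

end

locale EXT = QH scale Agr \<Lambda> R e for scale :: "'k::field \<Rightarrow> 'a::ring_1 \<Rightarrow> 'a" and Agr :: "nat \<Rightarrow> 'a set"
  and \<Lambda> :: "'l set" and R :: "('l \<times> 'l) set" and e :: "'l \<Rightarrow> 'a" +
  fixes n :: nat and la mu :: 'l and \<theta> :: "'a \<Rightarrow> 'k" and y0 :: 'a
  assumes n2: "2 \<le> n" and low: "\<And>i. i < n \<Longrightarrow> Agr i \<subseteq> alg_gen scale (Agr 0 \<union> Agr 1)"
    and la: "la \<in> \<Lambda>" and mu: "mu \<in> \<Lambda>"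
    and th_add: "\<And>x y. \<theta> (x + y) = \<theta> x + \<theta> y" and th_scale: "\<And>c x. \<theta> (scale c x) = c * \<theta> x"
    and th_B: "\<And>x. x \<in> alg_gen scale (Agr 0 \<union> Agr 1) \<Longrightarrow> x \<in> Agr n \<Longrightarrow> \<theta> x = 0"
    and th_U: "\<And>x u. x \<in> Agr n \<Longrightarrow> u \<in> U la \<Longrightarrow> \<theta> (x * u) = 0"
    and th_V: "\<And>v y. v \<in> V mu \<Longrightarrow> y \<in> Agr n \<Longrightarrow> \<theta> (v * y) = 0"
    and y0: "y0 \<in> Agr n" "y0 * e la = y0" and th_y0: "\<theta> (e mu * y0) \<noteq> 0"
begin

lemma th_0: "\<theta> 0 = 0"
proof -
  have "\<theta> (scale 0 0) = 0 * \<theta> 0" by (rule th_scale)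
  then show ?thesis by simp
qed
lemma th_neg: "\<theta> (- x) = - \<theta> x"
proof -
  have "\<theta> x + \<theta> (- x) = 0" using th_add[of x "- x"] th_0 by simp
  then show ?thesis by (metis add.commute eq_neg_iff_add_eq_0)
qed
lemma th_diff: "\<theta> (x - y) = \<theta> x - \<theta> y" using th_add[of x "- y"] th_neg[of y] by simp

lemma n0: "n \<noteq> 0" using n2 by simp

definition CM where "CM = cos la ` P la"
definition CN :: "('a \<Rightarrow> 'k) set" where "CN = {f :: 'a \<Rightarrow> 'k. (\<forall>x y. f (x + y) = f x + f y) \<and> (\<forall>c x. f (scale c x) = c * f x) \<and>
                 (\<forall>x. f x = f (e mu * hcomp Agr 0 x)) \<and> (\<forall>x\<in>V mu. f x = 0)}"

abbreviation M where "M \<equiv> Delta0 scale Agr \<Lambda> R e la"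
abbreviation N where "N \<equiv> shift (int n) (Nabla0 scale Agr \<Lambda> R e mu)"

definition addM :: "'a set \<Rightarrow> 'a set \<Rightarrow> 'a set" where "addM X Y = {x + y |x y. x \<in> X \<and> y \<in> Y}"
definition actM :: "'a \<Rightarrow> 'a set \<Rightarrow> 'a set" where "actM a X = {hcomp Agr 0 a * x + u |x u. x \<in> X \<and> u \<in> U la}"

lemma M_simps: "gcar M = CM" "gzero M = U la" "gadd M = addM" "gact M = actM"
   "gdeg M = (\<lambda>i. if i = 0 then CM else {U la})"
  unfolding Delta0_def Let_def CM_def cos_def[abs_def] addM_def[abs_def] actM_def[abs_def] by simp_all

lemma N_simps: "gcar N = CN" "gzero N = (\<lambda>_. 0)" "gadd N = (\<lambda>f g x. f x + g x)"
   "gact N = (\<lambda>a f x. f (x * hcomp Agr 0 a))"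
   "gdeg N = (\<lambda>i. if i = int n then CN else {\<lambda>_. 0})"
  unfolding Nabla0_def shift_def Let_def CN_def by simp_all

definition psi where "psi a X z = \<theta> (e mu * hc 0 z * hc n a * rep X)"

definition E :: "('a, ('a \<Rightarrow> 'k) \<times> 'a set) gmod" where
  "E = \<lparr> gcar = CN \<times> CM, gzero = (\<lambda>_. 0, U la),
         gadd = (\<lambda>x y. (gadd N (fst x) (fst y), gadd M (snd x) (snd y))),
         gact = (\<lambda>a x. (\<lambda>z. gact N a (fst x) z + psi a (snd x) z, gact M a (snd x))),
         gdeg = (\<lambda>i. gdeg N i \<times> gdeg M i) \<rparr>"

lemma E_simps: "gcar E = CN \<times> CM" "gzero E = (\<lambda>_. 0, U la)"
  "gadd E x y = (\<lambda>z. fst x z + fst y z, addM (snd x) (snd y))"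
  "gact E a x = (\<lambda>z. fst x (z * hc 0 a) + psi a (snd x) z, actM a (snd x))"
  "gdeg E i = (if i = int n then CN else {\<lambda>_. 0}) \<times> (if i = 0 then CM else {U la})"
  by (simp_all add: E_def M_simps N_simps)

lemma e_mu: "e mu \<in> A0" "e mu * e mu = e mu" using e_in[OF mu] e_idem[OF mu] by auto

lemma CM_cos: "X \<in> CM \<Longrightarrow> \<exists>x\<in>P la. X = cos la x" unfolding CM_def by blast

lemma rep_A0: assumes "X \<in> CM" shows "rep X \<in> A0"
proof -
  obtain x where x: "x \<in> P la" "X = cos la x" using CM_cos[OF assms] by blast
  have "rep X - x \<in> U la" using cos_rep x(2) by simp
  then have "rep X - x \<in> A0" using U_in_A0 la by blast
  moreover have "x \<in> A0" using P_A0[OF la x(1)] .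
  ultimately have "(rep X - x) + x \<in> A0" using add_Agr by blast
  then show ?thesis by simp
qed

lemma hc0_A0: "x \<in> A0 \<Longrightarrow> hc 0 x = x" by (simp add: hcomp_homog)
lemma hcn_A0: "x \<in> A0 \<Longrightarrow> hc n x = 0" using n0 by (simp add: hcomp_homog)
lemma hc0_An: "x \<in> Agr n \<Longrightarrow> hc 0 x = 0" using n0 by (simp add: hcomp_homog)
lemma hcn_An: "x \<in> Agr n \<Longrightarrow> hc n x = x" by (simp add: hcomp_homog)

lemma hc0_mult_A0: "a \<in> A0 \<Longrightarrow> hc 0 (z * a) = hc 0 z * a"
  using hc0_mult[of z a] hc0_A0 by simp
lemma hc0_mult_A0': "a \<in> A0 \<Longrightarrow> hc 0 (a * z) = a * hc 0 z"
  using hc0_mult[of a z] hc0_A0 by simp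

lemma th_U': "w \<in> A0 \<Longrightarrow> y \<in> Agr n \<Longrightarrow> u \<in> U la \<Longrightarrow> \<theta> (w * y * u) = 0"
  using th_U mult_A0_left by blast

lemma CN_add: "f \<in> CN \<Longrightarrow> f (x + y) = f x + f y" unfolding CN_def by blast
lemma CN_scale: "f \<in> CN \<Longrightarrow> f (scale c x) = c * f x" unfolding CN_def by blast
lemma CN_e: "f \<in> CN \<Longrightarrow> f x = f (e mu * hc 0 x)" unfolding CN_def by blast
lemma CN_V: "f \<in> CN \<Longrightarrow> x \<in> V mu \<Longrightarrow> f x = 0" unfolding CN_def by blast

lemma CN_zero: "(\<lambda>_. 0) \<in> CN" unfolding CN_def by simp

lemma CN_addI: "f \<in> CN \<Longrightarrow> g \<in> CN \<Longrightarrow> (\<lambda>x. f x + g x) \<in> CN"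
  unfolding CN_def by (auto simp: algebra_simps)

lemma psi_cos: "x \<in> A0 \<Longrightarrow> psi a (cos la x) z = \<theta> (e mu * hc 0 z * hc n a * x)"
proof -
  assume x: "x \<in> A0"
  have w: "e mu * hc 0 z \<in> A0" using A0_mult[OF e_mu(1) hcomp_in] by simp
  have d: "rep (cos la x) - x \<in> U la" by (rule cos_rep)
  have "e mu * hc 0 z * hc n a * rep (cos la x) = e mu * hc 0 z * hc n a * x + e mu * hc 0 z * hc n a * (rep (cos la x) - x)"
    by (simp add: algebra_simps)
  moreover have "\<theta> (e mu * hc 0 z * hc n a * (rep (cos la x) - x)) = 0"
    using th_U'[OF w hcomp_in d] by (simp add: mult.assoc)
  ultimately show ?thesis unfolding psi_def using th_add by simp
qed

end

context EXT begin

lemma P_mult: assumes "c \<in> A0" "x \<in> P la" shows "c * x \<in> P la"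
proof -
  obtain b where b: "b \<in> A0" "x = b * e la" using assms(2) unfolding lideal_def by blast
  have "c * x = (c * b) * e la" using b(2) by (simp add: mult.assoc)
  then show ?thesis unfolding lideal_def using A0_mult[OF assms(1) b(1)] by blast
qed

lemma P_add: "x \<in> P la \<Longrightarrow> y \<in> P la \<Longrightarrow> x + y \<in> P la"
  using P_sub[OF la] subspace_add by blast

lemma CM_cosI: "x \<in> P la \<Longrightarrow> cos la x \<in> CM" unfolding CM_def by blast

lemma actM_cos: "actM a (cos la x) = cos la (hc 0 a * x)"
  unfolding actM_def using cos_act[OF hcomp_in] by blast

lemma addM_cos: "addM (cos la x) (cos la y) = cos la (x + y)"
  unfolding addM_def using cos_add by blast

lemma mult4_scale: "e mu * hc 0 (scale c z) * w * x = scale c (e mu * hc 0 z * w * x)"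
proof -
  have "e mu * hc 0 (scale c z) * w * x = e mu * scale c (hc 0 z) * w * x" by (simp add: hcomp_scale)
  also have "e mu * scale c (hc 0 z) = scale c (e mu * hc 0 z)" by (rule scale_mult_right[symmetric])
  also have "scale c (e mu * hc 0 z) * w = scale c (e mu * hc 0 z * w)" by (rule scale_mult_left[symmetric])
  also have "scale c (e mu * hc 0 z * w) * x = scale c (e mu * hc 0 z * w * x)" by (rule scale_mult_left[symmetric])
  finally show ?thesis .
qed

lemma G_in_CN:
  assumes f: "f \<in> CN" and x: "x \<in> A0" and a0: "a0 \<in> A0" and an: "an \<in> Agr n"
  shows "(\<lambda>z. f (z * a0) + \<theta> (e mu * hc 0 z * an * x)) \<in> CN"
  unfolding CN_def
proof (intro CollectI conjI allI ballI)
  fix z z'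
  have "f ((z + z') * a0) = f (z * a0) + f (z' * a0)" by (simp add: distrib_right CN_add[OF f])
  moreover have "\<theta> (e mu * hc 0 (z + z') * an * x) = \<theta> (e mu * hc 0 z * an * x) + \<theta> (e mu * hc 0 z' * an * x)"
    by (simp add: hcomp_add distrib_left distrib_right th_add)
  ultimately show "f ((z + z') * a0) + \<theta> (e mu * hc 0 (z + z') * an * x) =
        f (z * a0) + \<theta> (e mu * hc 0 z * an * x) + (f (z' * a0) + \<theta> (e mu * hc 0 z' * an * x))"
    by (simp add: ac_simps)
next
  fix c z
  have "f (scale c z * a0) = c * f (z * a0)" using CN_scale[OF f] by (metis scale_mult_left)
  moreover have "\<theta> (e mu * hc 0 (scale c z) * an * x) = c * \<theta> (e mu * hc 0 z * an * x)"
    by (simp add: mult4_scale th_scale)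
  ultimately show "f (scale c z * a0) + \<theta> (e mu * hc 0 (scale c z) * an * x) =
        c * (f (z * a0) + \<theta> (e mu * hc 0 z * an * x))" by (simp add: distrib_left)
next
  fix z
  have z0: "hc 0 z \<in> A0" by simp
  have w: "e mu * hc 0 z \<in> A0" using A0_mult[OF e_mu(1) z0] .
  have h1: "hc 0 (e mu * hc 0 z) = e mu * hc 0 z" using hc0_A0[OF w] .
  have "f (z * a0) = f (e mu * hc 0 (z * a0))" by (rule CN_e[OF f])
  also have "\<dots> = f (e mu * hc 0 z * a0)" by (simp add: hc0_mult_A0[OF a0] mult.assoc)
  finally have fa: "f (z * a0) = f (e mu * hc 0 z * a0)" .
  have "\<theta> (e mu * hc 0 (e mu * hc 0 z) * an * x) = \<theta> (e mu * hc 0 z * an * x)"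
    by (simp add: h1 mult.assoc[symmetric] e_mu(2))
  then show "f (z * a0) + \<theta> (e mu * hc 0 z * an * x) =
      f (e mu * hc 0 z * a0) + \<theta> (e mu * hc 0 (e mu * hc 0 z) * an * x)"
    using fa by simp
next
  fix z assume z: "z \<in> V mu"
  have zA: "z \<in> A0" using V_in_A0[OF z mu] .
  have "f (z * a0) = 0" using CN_V[OF f V_mult_right[OF a0 z mu]] .
  moreover have "\<theta> (e mu * hc 0 z * an * x) = 0"
  proof -
    have "e mu * hc 0 z * an * x = z * (an * x)" using hc0_A0[OF zA] V_idem[OF z mu] by (simp add: mult.assoc)
    moreover have "an * x \<in> Agr n" using mult_A0_right[OF an x] .
    ultimately show ?thesis using th_V[OF z] by simp
  qed
  ultimately show "f (z * a0) + \<theta> (e mu * hc 0 z * an * x) = 0" by simp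
qed

lemma gactE_cos:
  assumes x: "x \<in> P la"
  shows "gact E a (f, cos la x) = (\<lambda>z. f (z * hc 0 a) + \<theta> (e mu * hc 0 z * hc n a * x), cos la (hc 0 a * x))"
  using psi_cos[OF P_A0[OF la x]] by (simp add: E_simps actM_cos)

lemma act_closed:
  assumes v: "v \<in> gcar E" shows "gact E a v \<in> gcar E"
proof -
  obtain f X where fX: "v = (f, X)" "f \<in> CN" "X \<in> CM" using v by (auto simp: E_simps)
  obtain x where x: "x \<in> P la" "X = cos la x" using CM_cos[OF fX(3)] by blast
  have "(\<lambda>z. f (z * hc 0 a) + \<theta> (e mu * hc 0 z * hc n a * x)) \<in> CN"
    by (rule G_in_CN[OF fX(2) P_A0[OF la x(1)] hcomp_in hcomp_in])
  moreover have "cos la (hc 0 a * x) \<in> CM" using CM_cosI[OF P_mult[OF hcomp_in x(1)]] .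
  ultimately show ?thesis using gactE_cos[OF x(1)] fX x by (simp add: E_simps)
qed

lemma act_gadd:
  assumes v: "v \<in> gcar E" and w: "w \<in> gcar E"
  shows "gact E a (gadd E v w) = gadd E (gact E a v) (gact E a w)"
proof -
  obtain f X where fX: "v = (f, X)" "f \<in> CN" "X \<in> CM" using v by (auto simp: E_simps)
  obtain x where x: "x \<in> P la" "X = cos la x" using CM_cos[OF fX(3)] by blast
  obtain g Y where gY: "w = (g, Y)" "g \<in> CN" "Y \<in> CM" using w by (auto simp: E_simps)
  obtain y where y: "y \<in> P la" "Y = cos la y" using CM_cos[OF gY(3)] by blast
  have vw: "gadd E v w = ((\<lambda>z. f z + g z), cos la (x + y))"
    using fX gY x y by (simp add: E_simps addM_cos)
  have xy: "x + y \<in> P la" using P_add[OF x(1) y(1)] .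
  show ?thesis
    unfolding vw gactE_cos[OF xy] fX(1) gY(1) x(2) y(2) gactE_cos[OF x(1)] gactE_cos[OF y(1)]
    by (simp add: E_simps addM_cos actM_cos distrib_left th_add ac_simps psi_cos[OF P_A0[OF la xy]])
qed

lemma act_plus:
  assumes v: "v \<in> gcar E"
  shows "gact E (a + b) v = gadd E (gact E a v) (gact E b v)"
proof -
  obtain f X where fX: "v = (f, X)" "f \<in> CN" "X \<in> CM" using v by (auto simp: E_simps)
  obtain x where x: "x \<in> P la" "X = cos la x" using CM_cos[OF fX(3)] by blast
  show ?thesis
    unfolding fX(1) x(2) gactE_cos[OF x(1)]
    by (simp add: E_simps addM_cos hcomp_add distrib_left distrib_right th_add CN_add[OF fX(2)] ac_simps)
qed

lemma act_one:
  assumes v: "v \<in> gcar E"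
  shows "gact E 1 v = v"
proof -
  obtain f X where fX: "v = (f, X)" "f \<in> CN" "X \<in> CM" using v by (auto simp: E_simps)
  obtain x where x: "x \<in> P la" "X = cos la x" using CM_cos[OF fX(3)] by blast
  have h0: "hc 0 1 = 1" using hc0_A0[OF one_Agr] .
  have hn: "hc n 1 = 0" using hcn_A0[OF one_Agr] .
  show ?thesis
    unfolding fX(1) x(2) gactE_cos[OF x(1)] by (simp add: h0 hn th_0)
qed

lemma act_mult:
  assumes v: "v \<in> gcar E"
  shows "gact E (a * b) v = gact E a (gact E b v)"
proof -
  obtain f X where fX: "v = (f, X)" "f \<in> CN" "X \<in> CM" using v by (auto simp: E_simps)
  obtain x where x: "x \<in> P la" "X = cos la x" using CM_cos[OF fX(3)] by blast
  have xA: "x \<in> A0" using P_A0[OF la x(1)] .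
  have bx: "hc 0 b * x \<in> P la" using P_mult[OF hcomp_in x(1)] .
  let ?D = "hc n (a * b) - (hc 0 a * hc n b + hc n a * hc 0 b)"
  have D: "?D \<in> alg_gen scale (Agr 0 \<union> Agr 1) \<inter> Agr n" using hcn_mult[OF n2 low] .
  have thD: "\<theta> (e mu * hc 0 z * ?D * x) = 0" for z
  proof (rule th_B)
    have "e mu * hc 0 z \<in> alg_gen scale (Agr 0 \<union> Agr 1)" using B_A0 A0_mult[OF e_mu(1) hcomp_in] by blast
    then show "e mu * hc 0 z * ?D * x \<in> alg_gen scale (Agr 0 \<union> Agr 1)"
      using D B_mult B_A0[OF xA] by blast
    have "e mu * hc 0 z * ?D \<in> Agr n" using mult_A0_left[OF A0_mult[OF e_mu(1) hcomp_in]] D by blast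
    then show "e mu * hc 0 z * ?D * x \<in> Agr n" using mult_A0_right xA by blast
  qed
  have split: "\<theta> (e mu * hc 0 z * hc n (a * b) * x) =
     \<theta> (e mu * hc 0 (z * hc 0 a) * hc n b * x) + \<theta> (e mu * hc 0 z * hc n a * (hc 0 b * x))" for z
  proof -
    define D where "D = ?D"
    have hD: "hc n (a * b) = hc 0 a * hc n b + hc n a * hc 0 b + D" unfolding D_def by simp
    have "e mu * hc 0 z * hc n (a * b) * x =
        e mu * hc 0 z * hc 0 a * hc n b * x + e mu * hc 0 z * hc n a * hc 0 b * x + e mu * hc 0 z * D * x"
      unfolding hD by (simp add: distrib_left distrib_right mult.assoc)
    then have "e mu * hc 0 z * hc n (a * b) * x =
        e mu * hc 0 z * hc 0 a * hc n b * x + e mu * hc 0 z * hc n a * hc 0 b * x + e mu * hc 0 z * ?D * x"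
      unfolding D_def .
    then have "\<theta> (e mu * hc 0 z * hc n (a * b) * x) =
        \<theta> (e mu * hc 0 z * hc 0 a * hc n b * x) + \<theta> (e mu * hc 0 z * hc n a * hc 0 b * x)"
      using thD[of z] by (simp add: th_add)
    moreover have "hc 0 (z * hc 0 a) = hc 0 z * hc 0 a" using hc0_mult_A0[OF hcomp_in] .
    ultimately show ?thesis by (simp add: mult.assoc)
  qed
  have hc0ab: "hc 0 (a * b) = hc 0 a * hc 0 b" by (rule hc0_mult)
  show ?thesis
    unfolding fX(1) x(2) gactE_cos[OF x(1)] gactE_cos[OF bx]
    by (simp add: hc0ab split mult.assoc[symmetric] add.assoc)
qed

end

context EXT begin

lemma zero_P: "0 \<in> P la" using P_sub[OF la] subspace_0 by blast
lemma U_CM: "U la \<in> CM" using CM_cosI[OF zero_P] cos0 by simp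
lemma neg_P: "x \<in> P la \<Longrightarrow> - x \<in> P la" using P_sub[OF la] subspace_neg by blast

lemma carE: "v \<in> gcar E \<Longrightarrow> \<exists>f x. v = (f, cos la x) \<and> f \<in> CN \<and> x \<in> P la"
  unfolding E_simps using CM_cos by fastforce

lemma gzero_car: "gzero E \<in> gcar E" by (simp add: E_simps CN_zero U_CM)

lemma gadd_car: "v \<in> gcar E \<Longrightarrow> w \<in> gcar E \<Longrightarrow> gadd E v w \<in> gcar E"
proof -
  assume v: "v \<in> gcar E" and w: "w \<in> gcar E"
  obtain f x where fx: "v = (f, cos la x)" "f \<in> CN" "x \<in> P la" using carE[OF v] by blast
  obtain g y where gy: "w = (g, cos la y)" "g \<in> CN" "y \<in> P la" using carE[OF w] by blast
  show ?thesis using fx gy CN_addI CM_cosI[OF P_add[OF fx(3) gy(3)]] by (simp add: E_simps addM_cos)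
qed

lemma gadd_assoc: "v \<in> gcar E \<Longrightarrow> w \<in> gcar E \<Longrightarrow> u \<in> gcar E \<Longrightarrow> gadd E (gadd E v w) u = gadd E v (gadd E w u)"
proof -
  assume v: "v \<in> gcar E" and w: "w \<in> gcar E" and u: "u \<in> gcar E"
  obtain f x where fx: "v = (f, cos la x)" using carE[OF v] by blast
  obtain g y where gy: "w = (g, cos la y)" using carE[OF w] by blast
  obtain h z where hz: "u = (h, cos la z)" using carE[OF u] by blast
  show ?thesis unfolding fx gy hz by (simp add: E_simps addM_cos add.assoc)
qed

lemma gadd_comm: "v \<in> gcar E \<Longrightarrow> w \<in> gcar E \<Longrightarrow> gadd E v w = gadd E w v"
proof -
  assume v: "v \<in> gcar E" and w: "w \<in> gcar E"
  obtain f x where fx: "v = (f, cos la x)" using carE[OF v] by blast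
  obtain g y where gy: "w = (g, cos la y)" using carE[OF w] by blast
  show ?thesis unfolding fx gy by (simp add: E_simps addM_cos add.commute)
qed

lemma gadd_zero: "v \<in> gcar E \<Longrightarrow> gadd E (gzero E) v = v"
proof -
  assume v: "v \<in> gcar E"
  obtain f x where fx: "v = (f, cos la x)" using carE[OF v] by blast
  have "addM (U la) (cos la x) = cos la x" using addM_cos[of 0 x] cos0 by simp
  then show ?thesis unfolding fx by (simp add: E_simps)
qed

lemma gadd_inv: "v \<in> gcar E \<Longrightarrow> \<exists>w\<in>gcar E. gadd E v w = gzero E"
proof -
  assume v: "v \<in> gcar E"
  obtain f x where fx: "v = (f, cos la x)" "f \<in> CN" "x \<in> P la" using carE[OF v] by blast
  have nf: "(\<lambda>z. - f z) \<in> CN" using fx(2) unfolding CN_def by (auto simp: algebra_simps)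
  have "((\<lambda>z. - f z), cos la (- x)) \<in> gcar E" using nf CM_cosI[OF neg_P[OF fx(3)]] by (simp add: E_simps)
  moreover have "gadd E v ((\<lambda>z. - f z), cos la (- x)) = gzero E"
    unfolding fx(1) using addM_cos[of x "- x"] cos0 by (simp add: E_simps)
  ultimately show ?thesis by blast
qed

lemma hc_homog0: "a \<in> Agr i \<Longrightarrow> hc 0 a = (if i = 0 then a else 0)"
  using hcomp_homog by (metis)
lemma hc_homogn: "a \<in> Agr i \<Longrightarrow> hc n a = (if i = n then a else 0)"
  using hcomp_homog by (metis)

lemma zero_deg: "(\<lambda>_. 0, U la) \<in> gdeg E k"
  by (simp add: E_simps CN_zero U_CM)

lemma deg_act:
  assumes a: "a \<in> Agr i" and v: "v \<in> gdeg E j"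
  shows "gact E a v \<in> gdeg E (int i + j)"
proof -
  have vv: "v \<in> (if j = int n then CN else {\<lambda>_. 0}) \<times> (if j = 0 then CM else {U la})"
    using v by (simp add: E_simps)
  show ?thesis
  proof (cases "j = 0")
    case j0: True
    then have jn: "j \<noteq> int n" using n0 by simp
    then obtain X where X: "v = ((\<lambda>_. 0), X)" "X \<in> CM" using vv j0 by auto
    obtain x where x: "x \<in> P la" "X = cos la x" using CM_cos[OF X(2)] by blast
    have act: "gact E a v = (\<lambda>z. \<theta> (e mu * hc 0 z * hc n a * x), cos la (hc 0 a * x))"
      unfolding X(1) x(2) gactE_cos[OF x(1)] by simp
    show ?thesis
    proof (cases "i = 0")
      case True
      then have "hc n a = 0" "hc 0 a = a" using hc_homog0[OF a] hc_homogn[OF a] n0 by auto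
      then show ?thesis using act CM_cosI[OF P_mult[OF _ x(1)]] a True j0 jn th_0
        by (simp add: E_simps)
    next
      case i0: False
      show ?thesis
      proof (cases "i = n")
        case True
        then have h: "hc n a = a" "hc 0 a = 0" using hc_homog0[OF a] hc_homogn[OF a] n0 by auto
        have "(\<lambda>z. \<theta> (e mu * hc 0 z * hc n a * x)) \<in> CN"
          using G_in_CN[OF CN_zero P_A0[OF la x(1)] zero_Agr hcomp_in[of n a]] by simp
        then show ?thesis using act h True j0 cos0 U_CM by (simp add: E_simps)
      next
        case False
        then have h: "hc n a = 0" "hc 0 a = 0" using hc_homog0[OF a] hc_homogn[OF a] i0 by auto
        then show ?thesis using act zero_deg[of "int i + j"] cos0 th_0 by simp
      qed
    qed
  next
    case j0: False
    show ?thesis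
    proof (cases "j = int n")
      case True
      then obtain f where f: "v = (f, U la)" "f \<in> CN" using vv j0 by auto
      have act: "gact E a v = (\<lambda>z. f (z * hc 0 a), U la)"
        unfolding f(1) using gactE_cos[OF zero_P, of a f] cos0 th_0 by simp
      show ?thesis
      proof (cases "i = 0")
        case True
        then have h: "hc 0 a = a" using hc_homog0[OF a] by simp
        have "(\<lambda>z. f (z * a) + \<theta> (e mu * hc 0 z * 0 * 0)) \<in> CN"
          by (rule G_in_CN[OF f(2) zero_Agr]) (use a True in auto)
        then have "(\<lambda>z. f (z * a)) \<in> CN" using th_0 by simp
        then show ?thesis using act h True \<open>j = int n\<close> j0 by (simp add: E_simps)
      next
        case False
        then have h: "hc 0 a = 0" using hc_homog0[OF a] by simp
        have f0: "f 0 = 0" using CN_scale[OF f(2), of 0 0] by simp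
        have "gact E a v = (\<lambda>_. 0, U la)" using act h f0 by simp
        then show ?thesis using zero_deg by simp
      qed
    next
      case False
      then have v0: "v = (\<lambda>_. 0, U la)" using vv j0 by auto
      have "gact E a v = (\<lambda>_. 0, U la)" unfolding v0 using gactE_cos[OF zero_P, of a "\<lambda>_. 0"] cos0 th_0 by simp
      then show ?thesis using zero_deg by simp
    qed
  qed
qed

lemma deg_sub: "gdeg E k \<subseteq> gcar E"
  by (auto simp: E_simps CN_zero U_CM)

lemma deg_add: "v \<in> gdeg E k \<Longrightarrow> w \<in> gdeg E k \<Longrightarrow> gadd E v w \<in> gdeg E k"
proof -
  assume v: "v \<in> gdeg E k" and w: "w \<in> gdeg E k"
  have vc: "v \<in> gcar E" "w \<in> gcar E" using v w deg_sub by auto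
  obtain f x where fx: "v = (f, cos la x)" "f \<in> CN" "x \<in> P la" using carE[OF vc(1)] by blast
  obtain g y where gy: "w = (g, cos la y)" "g \<in> CN" "y \<in> P la" using carE[OF vc(2)] by blast
  have sum: "gadd E v w = ((\<lambda>z. f z + g z), cos la (x + y))" unfolding fx gy by (simp add: E_simps addM_cos)
  have fst_ok: "(\<lambda>z. f z + g z) \<in> (if k = int n then CN else {\<lambda>_. 0})"
    using v w fx gy CN_addI by (auto simp: E_simps)
  have snd_ok: "cos la (x + y) \<in> (if k = 0 then CM else {U la})"
  proof (cases "k = 0")
    case True then show ?thesis using CM_cosI[OF P_add[OF fx(3) gy(3)]] by simp
  next
    case False
    then have "cos la x = U la" "cos la y = U la" using v w fx gy by (auto simp: E_simps)
    then have "x \<in> U la" "y \<in> U la" using cos_eq[of la x 0] cos_eq[of la y 0] cos0 by auto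
    then have "cos la (x + y) = cos la 0" using cos_eq U_add by simp
    then show ?thesis using False cos0 by simp
  qed
  show ?thesis unfolding sum using fst_ok snd_ok by (simp add: E_simps)
qed

lemma scale1_A0: "scale c 1 \<in> A0" using scale_Agr[OF one_Agr] .

lemma deg_scale: "v \<in> gdeg E k \<Longrightarrow> gact E (scale c 1) v \<in> gdeg E k"
  using deg_act[OF scale1_A0, of v k] by simp

end

context EXT begin

lemma degE_other: "k \<noteq> 0 \<Longrightarrow> k \<noteq> int n \<Longrightarrow> gdeg E k = {(\<lambda>_. 0, U la)}"
  by (simp add: E_simps)

lemma gsum_two:
  assumes c: "\<And>i. c i \<in> gdeg E i"
  shows "gsum E c {i. c i \<noteq> gzero E} = gadd E (c 0) (c (int n))"
proof -
  have z: "gzero E = (\<lambda>_. 0, U la)" by (simp add: E_simps)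
  have other: "c i = gzero E" if "i \<noteq> 0" "i \<noteq> int n" for i
    using c[of i] degE_other[OF that] z by simp
  have S: "{i. c i \<noteq> gzero E} = {i \<in> {0, int n}. c i \<noteq> gzero E}" using other by blast
  have car: "c 0 \<in> gcar E" "c (int n) \<in> gcar E" using c deg_sub by auto
  have n0': "(0::int) < int n" using n0 by simp
  show ?thesis
  proof (cases "c 0 = gzero E")
    case c0: True
    show ?thesis
    proof (cases "c (int n) = gzero E")
      case True
      then have "{i. c i \<noteq> gzero E} = {}" using S c0 by auto
      then show ?thesis using c0 True gadd_zero[OF gzero_car] by (simp add: gsum_def)
    next
      case False
      then have "{i. c i \<noteq> gzero E} = {int n}" using S c0 n0' by auto
      then have "gsum E c {i. c i \<noteq> gzero E} = gadd E (c (int n)) (gzero E)" by (simp add: gsum_def)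
      also have "\<dots> = gadd E (gzero E) (c (int n))" using gadd_comm[OF car(2) gzero_car] .
      finally show ?thesis using c0 by simp
    qed
  next
    case c0: False
    show ?thesis
    proof (cases "c (int n) = gzero E")
      case True
      then have "{i. c i \<noteq> gzero E} = {0}" using S c0 n0' by auto
      then show ?thesis using True by (simp add: gsum_def)
    next
      case False
      then have "{i. c i \<noteq> gzero E} = {0, int n}" using S c0 by auto
      moreover have "sorted_list_of_set {0, int n} = [0, int n]" using n0' by simp
      ultimately show ?thesis using gadd_comm[OF car(2) gzero_car] gadd_zero[OF car(2)]
        by (simp add: gsum_def)
    qed
  qed
qed

lemma decomp:
  assumes v: "v \<in> gcar E"
  shows "\<exists>!c. (\<forall>i. c i \<in> gdeg E i) \<and> finite {i. c i \<noteq> gzero E} \<and> v = gsum E c {i. c i \<noteq> gzero E}"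
proof -
  obtain f x where fx: "v = (f, cos la x)" "f \<in> CN" "x \<in> P la" using carE[OF v] by blast
  have fin: "finite {i. c i \<noteq> gzero E}" if "\<And>i. c i \<in> gdeg E i" for c
  proof (rule finite_subset[of _ "{0, int n}"])
    show "{i. c i \<noteq> gzero E} \<subseteq> {0, int n}"
    proof
      fix i assume i: "i \<in> {i. c i \<noteq> gzero E}"
      show "i \<in> {0, int n}"
      proof (rule ccontr)
        assume "i \<notin> {0, int n}"
        then have "c i = gzero E" using that[of i] degE_other[of i] by (simp add: E_simps(2))
        then show False using i by simp
      qed
    qed
  qed simp
  define c where "c i = (if i = 0 then (\<lambda>_. 0, cos la x) else if i = int n then (f, U la) else (\<lambda>_. 0, U la))" for i
  have cd: "c i \<in> gdeg E i" for i
    unfolding c_def using fx CM_cosI n0 by (auto simp: E_simps CN_zero U_CM)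
  have "gadd E (c 0) (c (int n)) = (f, addM (cos la x) (cos la 0))" using n0 cos0 by (simp add: c_def E_simps)
  then have cs: "gadd E (c 0) (c (int n)) = v" using addM_cos[of x 0] fx(1) by simp
  show ?thesis
  proof (rule ex1I[of _ c])
    show "(\<forall>i. c i \<in> gdeg E i) \<and> finite {i. c i \<noteq> gzero E} \<and> v = gsum E c {i. c i \<noteq> gzero E}"
      using cd fin[OF cd] gsum_two[OF cd] cs by simp
  next
    fix c' assume c': "(\<forall>i. c' i \<in> gdeg E i) \<and> finite {i. c' i \<noteq> gzero E} \<and> v = gsum E c' {i. c' i \<noteq> gzero E}"
    then have cd': "\<And>i. c' i \<in> gdeg E i" by blast
    have vs: "v = gadd E (c' 0) (c' (int n))" using c' gsum_two[OF cd'] by simp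
    obtain X where X: "c' 0 = (\<lambda>_. 0, X)" "X \<in> CM" using cd'[of 0] n0 by (auto simp: E_simps)
    obtain g where g: "c' (int n) = (g, U la)" "g \<in> CN" using cd'[of "int n"] n0 by (auto simp: E_simps)
    obtain y where y: "X = cos la y" "y \<in> P la" using CM_cos[OF X(2)] by blast
    have "v = (g, cos la y)" using vs X g y addM_cos[of y 0] cos0 by (simp add: E_simps)
    then have fg: "g = f" "cos la y = cos la x" using fx(1) by auto
    show "c' = c"
    proof
      fix i show "c' i = c i"
      proof (cases "i = 0")
        case True then show ?thesis using X y fg by (simp add: c_def)
      next
        case i0: False
        show ?thesis
        proof (cases "i = int n")
          case True then show ?thesis using g fg i0 by (simp add: c_def)
        next
          case False then show ?thesis using cd'[of i] degE_other[OF i0 False] i0 by (simp add: c_def)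
        qed
      qed
    qed
  qed
qed

lemma CN_eq_on_span:
  assumes f: "f \<in> CN" and g: "g \<in> CN" and eq: "\<forall>b\<in>S. f b = g b" and sp: "span S = UNIV"
  shows "f = g"
proof
  fix z
  have "z \<in> span S" using sp by simp
  then show "f z = g z"
  proof (induct z rule: span_induct_alt)
    case base
    have "f 0 = 0" "g 0 = 0" using CN_scale[OF f, of 0 0] CN_scale[OF g, of 0 0] by auto
    then show ?case by simp
  next
    case (step c s y)
    then show ?case using eq CN_add[OF f] CN_add[OF g] CN_scale[OF f] CN_scale[OF g] by simp
  qed
qed

lemma fin_dim:
  "\<exists>(N::nat) (F :: ('a \<Rightarrow> 'k) \<times> 'a set \<Rightarrow> nat \<Rightarrow> 'k). inj_on F (gcar E) \<and>
        (\<forall>x\<in>gcar E. \<forall>i\<ge>N. F x i = 0) \<and>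
        (\<forall>x\<in>gcar E. \<forall>y\<in>gcar E. F (gadd E x y) = (\<lambda>i. F x i + F y i)) \<and>
        (\<forall>c. \<forall>x\<in>gcar E. F (gact E (scale c 1) x) = (\<lambda>i. c * F x i))"
proof -
  obtain B0 where B0: "finite B0" "span B0 = UNIV" using fin_span by blast
  obtain bs where bs: "set bs = B0" using finite_list[OF B0(1)] by blast
  obtain BU where BU: "BU \<subseteq> U la" "independent BU" "U la \<subseteq> span BU"
    using maximal_independent_subset[of "U la"] by blast
  have spBU: "span BU = U la" using BU span_minimal[OF BU(1) U_sub] by blast
  define BB where "BB = extend_basis BU"
  have BB: "BU \<subseteq> BB" "independent BB" "span BB = UNIV"
    unfolding BB_def using extend_basis_superset[OF BU(2)] independent_extend_basis[OF BU(2)] span_extend_basis[OF BU(2)]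
    by auto
  have finBB: "finite BB" using independent_span_bound[OF B0(1) BB(2)] B0(2) by blast
  obtain cs where cs: "set cs = BB - BU" using finite_list[of "BB - BU"] finBB by blast
  define L1 where "L1 = length bs"
  define L2 where "L2 = length cs"
  define rp where "rp X b = representation BB (rep X) b" for X b
  define F where "F v i = (if i < L1 then fst v (bs ! i) else if i < L1 + L2 then rp (snd v) (cs ! (i - L1)) else 0)"
    for v :: "('a \<Rightarrow> 'k) \<times> 'a set" and i
  have inspan: "x \<in> span BB" for x using BB(3) by simp
  have repU: "representation BB u b = 0" if u: "u \<in> U la" and b: "b \<notin> BU" for u b
  proof -
    have "representation BB u = representation BU u"
      by (rule representation_extend[OF BB(2) _ BB(1)]) (use u spBU in simp)
    then show ?thesis using representation_ne_zero[of BU u b] b by auto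
  qed
  have R: "rp (cos la x) b = representation BB x b" if b: "b \<notin> BU" for x b
  proof -
    have d: "rep (cos la x) - x \<in> U la" by (rule cos_rep)
    have "representation BB (rep (cos la x)) = representation BB (x + (rep (cos la x) - x))" by simp
    also have "\<dots> = (\<lambda>b. representation BB x b + representation BB (rep (cos la x) - x) b)"
      by (rule representation_add[OF BB(2) inspan inspan])
    finally show ?thesis unfolding rp_def using repU[OF d b] by simp
  qed
  have csBU: "cs ! j \<notin> BU" if "j < L2" for j using that cs unfolding L2_def by (metis DiffE nth_mem)
  show ?thesis
  proof (intro exI[of _ "L1 + L2"] exI[of _ F] conjI ballI allI impI)
    show "inj_on F (gcar E)"
    proof (rule inj_onI)
      fix v w assume v: "v \<in> gcar E" and w: "w \<in> gcar E" and Fvw: "F v = F w"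
      obtain f x where fx: "v = (f, cos la x)" "f \<in> CN" "x \<in> P la" using carE[OF v] by blast
      obtain g y where gy: "w = (g, cos la y)" "g \<in> CN" "y \<in> P la" using carE[OF w] by blast
      have "\<forall>b\<in>B0. f b = g b"
      proof
        fix b assume "b \<in> B0"
        then obtain i where i: "i < L1" "bs ! i = b" using bs unfolding L1_def by (metis in_set_conv_nth)
        show "f b = g b" using fun_cong[OF Fvw, of i] i fx gy by (simp add: F_def)
      qed
      then have fg: "f = g" using CN_eq_on_span[OF fx(2) gy(2) _ B0(2)] by simp
      have rr: "representation BB (x - y) b = 0" if b: "b \<notin> BU" for b
      proof (cases "b \<in> BB")
        case True
        then have "b \<in> set cs" using cs b by blast
        then obtain j where j: "j < L2" "cs ! j = b" unfolding L2_def by (metis in_set_conv_nth)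
        have "F v (L1 + j) = F w (L1 + j)" using Fvw by simp
        then have "rp (cos la x) b = rp (cos la y) b" using j fx gy by (simp add: F_def)
        then have "representation BB x b = representation BB y b" using R[OF b] by simp
        then show ?thesis using representation_diff[OF BB(2) inspan inspan] by simp
      next
        case False
        then show ?thesis using representation_ne_zero by blast
      qed
      have "x - y = (\<Sum>b | representation BB (x - y) b \<noteq> 0. scale (representation BB (x - y) b) b)"
        using sum_nonzero_representation_eq[OF BB(2) inspan] by simp
      also have "\<dots> \<in> span BU"
      proof (rule span_sum)
        fix b assume "b \<in> {b. representation BB (x - y) b \<noteq> 0}"
        then have "b \<in> BU" using rr by blast
        then show "scale (representation BB (x - y) b) b \<in> span BU" by (intro span_scale span_base)
      qed
      finally have "x - y \<in> U la" using spBU by simp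
      then have "cos la x = cos la y" using cos_eq by blast
      then show "v = w" using fx gy fg by simp
    qed
  next
    fix v i assume "v \<in> gcar E" "L1 + L2 \<le> i"
    then show "F v i = 0" by (simp add: F_def)
  next
    fix v w assume v: "v \<in> gcar E" and w: "w \<in> gcar E"
    obtain f x where fx: "v = (f, cos la x)" "f \<in> CN" "x \<in> P la" using carE[OF v] by blast
    obtain g y where gy: "w = (g, cos la y)" "g \<in> CN" "y \<in> P la" using carE[OF w] by blast
    have add: "gadd E v w = ((\<lambda>z. f z + g z), cos la (x + y))" unfolding fx gy by (simp add: E_simps addM_cos)
    show "F (gadd E v w) = (\<lambda>i. F v i + F w i)"
    proof
      fix i
      show "F (gadd E v w) i = F v i + F w i"
      proof (cases "L1 \<le> i \<and> i < L1 + L2")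
        case True
        then have "cs ! (i - L1) \<notin> BU" using csBU by auto
        then show ?thesis using True unfolding add unfolding fx gy F_def
          by (simp add: R representation_add[OF BB(2) inspan inspan])
      next
        case False
        then show ?thesis unfolding add unfolding fx gy F_def by auto
      qed
    qed
  next
    fix c v assume v: "v \<in> gcar E"
    obtain f x where fx: "v = (f, cos la x)" "f \<in> CN" "x \<in> P la" using carE[OF v] by blast
    have h0: "hc 0 (scale c 1) = scale c 1" using hc0_A0[OF scale1_A0] .
    have hn: "hc n (scale c 1) = 0" using hcn_A0[OF scale1_A0] .
    have act: "gact E (scale c 1) v = ((\<lambda>z. c * f z), cos la (scale c x))"
      unfolding fx gactE_cos[OF fx(3)] h0 hn using th_0 CN_scale[OF fx(2)]
      by (simp add: mult_scale_one scale_one_mult)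
    show "F (gact E (scale c 1) v) = (\<lambda>i. c * F v i)"
    proof
      fix i
      show "F (gact E (scale c 1) v) i = c * F v i"
      proof (cases "L1 \<le> i \<and> i < L1 + L2")
        case True
        then have "cs ! (i - L1) \<notin> BU" using csBU by auto
        then show ?thesis using True unfolding act unfolding fx F_def
          by (simp add: R representation_scale[OF BB(2) inspan])
      next
        case False
        then show ?thesis unfolding act unfolding fx F_def by auto
      qed
    qed
  qed
qed

end

context EXT begin

lemma isgmod: "is_gmod scale Agr E"
proof -
  have g: "gzero E \<in> gdeg E i" for i using zero_deg by (simp add: E_simps)
  show ?thesis
    unfolding is_gmod_def
    apply (intro conjI)
                  apply (rule gzero_car)
                 apply (intro ballI gadd_car; assumption)
                apply (intro ballI gadd_assoc; assumption)
               apply (intro ballI gadd_comm; assumption)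
              apply (intro ballI gadd_zero; assumption)
             apply (intro ballI gadd_inv; assumption)
            apply (intro allI ballI act_closed; assumption)
           apply (intro allI ballI act_gadd; assumption)
          apply (intro allI ballI act_plus; assumption)
         apply (intro allI ballI act_mult; assumption)
        apply (intro ballI act_one; assumption)
       apply (intro allI conjI ballI deg_sub g deg_add deg_scale; assumption)
      apply (intro allI ballI deg_act; assumption)
     apply (intro ballI decomp; assumption)
    apply (rule fin_dim)
    done
qed

lemma homN: "gmod_hom N E (\<lambda>f. (f, gzero M))"
  unfolding gmod_hom_def M_simps
proof (intro conjI ballI allI)
  fix g assume "g \<in> gcar N"
  then show "(g, U la) \<in> gcar E" using U_CM by (simp add: E_simps N_simps)
next
  fix g h assume "g \<in> gcar N" "h \<in> gcar N"
  show "(gadd N g h, U la) = gadd E (g, U la) (h, U la)"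
    using addM_cos[of 0 0] cos0 by (simp add: E_simps N_simps)
next
  fix a g assume "g \<in> gcar N"
  show "(gact N a g, U la) = gact E a (g, U la)"
    using gactE_cos[OF zero_P, of a g] cos0 th_0 by (simp add: N_simps)
next
  fix i g assume "g \<in> gdeg N i"
  then show "(g, U la) \<in> gdeg E i" using U_CM by (simp add: E_def M_simps)
qed

lemma homM: "gmod_hom E M snd"
  unfolding gmod_hom_def M_simps
  by (simp add: E_def M_simps)

lemma nonsplit: "\<not> (\<exists>s. gmod_hom M E s \<and> (\<forall>x\<in>gcar M. snd (s x) = x))"
proof
  assume "\<exists>s. gmod_hom M E s \<and> (\<forall>x\<in>gcar M. snd (s x) = x)"
  then obtain s where hom: "gmod_hom M E s" and sec: "\<forall>x\<in>gcar M. snd (s x) = x" by blast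
  have h1: "\<forall>x\<in>gcar M. \<forall>y\<in>gcar M. s (gadd M x y) = gadd E (s x) (s y)"
    and h2: "\<forall>a. \<forall>x\<in>gcar M. s (gact M a x) = gact E a (s x)"
    and h3: "\<forall>i. \<forall>x\<in>gdeg M i. s x \<in> gdeg E i"
    using hom unfolding gmod_hom_def by blast+
  have eP: "e la \<in> P la" unfolding lideal_def using e_in[OF la] e_idem[OF la] by (metis (mono_tags, lifting) mem_Collect_eq)
  define X0 where "X0 = cos la (e la)"
  have X0: "X0 \<in> CM" unfolding X0_def using CM_cosI[OF eP] .
  have "s X0 \<in> gdeg E 0" using h3 X0 by (simp add: M_simps)
  then have f0: "fst (s X0) = (\<lambda>_. 0)" using n0 by (auto simp: E_simps)
  have "snd (s X0) = X0" using sec X0 by (simp add: M_simps)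
  then have sX0: "s X0 = (\<lambda>_. 0, X0)" using f0 by (metis prod.collapse)
  have y00: "hc 0 y0 = 0" using hc0_An[OF y0(1)] .
  have y0n: "hc n y0 = y0" using hcn_An[OF y0(1)] .
  have actU: "gact M y0 X0 = U la"
    unfolding M_simps X0_def actM_cos y00 using cos0 by simp
  have UM: "U la \<in> gcar M" using U_CM by (simp add: M_simps)
  have "s (gadd M (U la) (U la)) = gadd E (s (U la)) (s (U la))" using h1 UM by blast
  moreover have "gadd M (U la) (U la) = U la" using addM_cos[of 0 0] cos0 by (simp add: M_simps)
  ultimately have "s (U la) = gadd E (s (U la)) (s (U la))" by simp
  then have "fst (s (U la)) z = fst (s (U la)) z + fst (s (U la)) z" for z
    by (metis (no_types, lifting) E_simps(3) fst_conv)
  then have fsU: "fst (s (U la)) 1 = 0" by (metis add_cancel_right_right)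
  have "s (gact M y0 X0) = gact E y0 (s X0)" using h2 X0 by (simp add: M_simps)
  then have "s (U la) = gact E y0 (\<lambda>_. 0, cos la (e la))" using actU sX0 X0_def by simp
  also have "\<dots> = (\<lambda>z. \<theta> (e mu * hc 0 z * hc n y0 * e la), cos la (hc 0 y0 * e la))"
    using gactE_cos[OF eP, of y0 "\<lambda>_. 0"] by simp
  finally have "fst (s (U la)) 1 = \<theta> (e mu * hc 0 1 * y0 * e la)" using y0n by simp
  also have "\<dots> = \<theta> (e mu * y0)" using hc0_A0[OF one_Agr] y0(2) by (simp add: mult.assoc)
  finally show False using fsU th_y0 by simp
qed

lemma ext1: "ext1_nonzero scale Agr M N"
  unfolding ext1_nonzero_def
proof (intro exI[of _ E] conjI)
  show "is_gmod scale Agr E" by (rule isgmod)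
  show "gcar E = gcar N \<times> gcar M" by (simp add: E_simps M_simps N_simps)
  show "gzero E = (gzero N, gzero M)" by (simp add: E_simps M_simps N_simps)
  show "\<forall>x y. gadd E x y = (gadd N (fst x) (fst y), gadd M (snd x) (snd y))" by (simp add: E_def)
  show "\<forall>i. gdeg E i = gdeg N i \<times> gdeg M i" by (simp add: E_def)
  show "gmod_hom N E (\<lambda>n. (n, gzero M))" by (rule homN)
  show "gmod_hom E M snd" by (rule homM)
  show "\<not> (\<exists>s. gmod_hom M E s \<and> (\<forall>x\<in>gcar M. snd (s x) = x))" by (rule nonsplit)
qed

end

theorem theorem2p2:
  fixes scale :: "'k::field \<Rightarrow> 'a::ring_1 \<Rightarrow> 'a"
    and Agr :: "nat \<Rightarrow> 'a set"
    and \<Lambda> :: "'l set"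
    and R :: "('l \<times> 'l) set"
    and e :: "'l \<Rightarrow> 'a"
  assumes alg_closed: "\<forall>p :: 'k poly. 0 < degree p \<longrightarrow> (\<exists>x. poly p x = 0)"
    and graded: "fd_pos_graded_algebra scale Agr"
    and qh: "quasi_hereditary scale Agr \<Lambda> R e"
    and Q_Koszul_1: "\<forall>la\<in>\<Lambda>. \<forall>\<mu>\<in>\<Lambda>. \<forall>m::int.
        ext1_nonzero scale Agr (Delta0 scale Agr \<Lambda> R e la) (shift m (Nabla0 scale Agr \<Lambda> R e \<mu>))
        \<longrightarrow> m = 1"
  shows "alg_gen scale (Agr 0 \<union> Agr 1) = UNIV"
proof (rule ccontr)
  assume nB: "alg_gen scale (Agr 0 \<union> Agr 1) \<noteq> UNIV"
  interpret Q: QH scale Agr \<Lambda> R e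
    by (intro QH.intro GA.intro QH_axioms.intro graded qh)
  obtain n where n2: "2 \<le> n" and low: "\<forall>i<n. Agr i \<subseteq> alg_gen scale (Agr 0 \<union> Agr 1)"
    and notn: "\<not> Agr n \<subseteq> alg_gen scale (Agr 0 \<union> Agr 1)"
    using Q.exists_n[OF nB] by blast
  define Bn where "Bn = alg_gen scale (Agr 0 \<union> Agr 1) \<inter> Agr n"
  have Bn_sub: "Q.subspace Bn" unfolding Bn_def using Q.subspace_inter[OF Q.B_sub Q.sub_Agr] .
  have Bn_deg: "Bn \<subseteq> Agr n" unfolding Bn_def by blast
  have Bn_left: "a * x \<in> Bn" if "a \<in> Agr 0" "x \<in> Bn" for a x
  proof -
    have "x \<in> alg_gen scale (Agr 0 \<union> Agr 1)" "x \<in> Agr n" using that(2) unfolding Bn_def by auto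
    then show ?thesis unfolding Bn_def using Q.B_mult[OF Q.B_A0[OF that(1)]] Q.mult_A0_left[OF that(1)] by blast
  qed
  have Bn_right: "x * a \<in> Bn" if "a \<in> Agr 0" "x \<in> Bn" for a x
  proof -
    have "x \<in> alg_gen scale (Agr 0 \<union> Agr 1)" "x \<in> Agr n" using that(2) unfolding Bn_def by auto
    then show ?thesis unfolding Bn_def using Q.B_mult[OF _ Q.B_A0[OF that(1)]] Q.mult_A0_right[OF _ that(1)] by blast
  qed
  have notall: "\<not> Agr n \<subseteq> Bn" using notn unfolding Bn_def by blast
  obtain la mu y where la: "la \<in> \<Lambda>" and mu: "mu \<in> \<Lambda>" and y: "y \<in> Agr n" "y * e la = y"
    and ny: "e mu * y \<notin> Q.span (Bn \<union> Q.XU n la \<union> Q.VY n mu)"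
    using Q.core[OF Bn_sub Bn_deg Bn_left Bn_right notall] by blast
  obtain \<theta> :: "'a \<Rightarrow> 'k" where th: "(\<forall>x y. \<theta> (x + y) = \<theta> x + \<theta> y) \<and> (\<forall>c x. \<theta> (scale c x) = c * \<theta> x) \<and>
           (\<forall>x\<in>Q.span (Bn \<union> Q.XU n la \<union> Q.VY n mu). \<theta> x = 0) \<and> \<theta> (e mu * y) = 1"
    using Q.sep_functional[OF Q.subspace_span ny] by (rule exE)
  have th_add: "\<forall>x y. \<theta> (x + y) = \<theta> x + \<theta> y" using th by (rule conjunct1)
  have th_scale: "\<forall>c x. \<theta> (scale c x) = c * \<theta> x" using th by (elim conjE)
  have th_van: "\<forall>x\<in>Q.span (Bn \<union> Q.XU n la \<union> Q.VY n mu). \<theta> x = 0" using th by (elim conjE)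
  have th_w: "\<theta> (e mu * y) = 1" using th by (elim conjE)
  have EX: "EXT scale Agr \<Lambda> R e n la mu \<theta> y"
  proof (intro EXT.intro EXT_axioms.intro)
    show "QH scale Agr \<Lambda> R e" by (intro QH.intro GA.intro QH_axioms.intro graded qh)
    show "2 \<le> n" by (rule n2)
    show "\<And>i. i < n \<Longrightarrow> Agr i \<subseteq> alg_gen scale (Agr 0 \<union> Agr 1)" using low by blast
    show "la \<in> \<Lambda>" "mu \<in> \<Lambda>" by (rule la, rule mu)
    show "\<And>x y. \<theta> (x + y) = \<theta> x + \<theta> y" using th_add by blast
    show "\<And>c x. \<theta> (scale c x) = c * \<theta> x" using th_scale by blast
    show "\<And>x. x \<in> alg_gen scale (Agr 0 \<union> Agr 1) \<Longrightarrow> x \<in> Agr n \<Longrightarrow> \<theta> x = 0"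
    proof -
      fix x assume "x \<in> alg_gen scale (Agr 0 \<union> Agr 1)" "x \<in> Agr n"
      then have "x \<in> Bn" unfolding Bn_def by blast
      then have "x \<in> Bn \<union> Q.XU n la \<union> Q.VY n mu" by (rule UnI1[OF UnI1])
      then show "\<theta> x = 0" by (rule th_van[rule_format, OF Q.span_base])
    qed
    show "\<And>x u. x \<in> Agr n \<Longrightarrow> u \<in> std_tr scale (Agr 0) \<Lambda> R e la \<Longrightarrow> \<theta> (x * u) = 0"
    proof -
      fix x u assume "x \<in> Agr n" "u \<in> std_tr scale (Agr 0) \<Lambda> R e la"
      have XUeq: "Q.XU n la = {x * u |x u. x \<in> Agr n \<and> u \<in> std_tr scale (Agr 0) \<Lambda> R e la}"
        by (rule Q.XU_def[OF Bn_sub Bn_deg Bn_left Bn_right notall])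
      have "x * u \<in> {x * u |x u. x \<in> Agr n \<and> u \<in> std_tr scale (Agr 0) \<Lambda> R e la}"
        using \<open>x \<in> Agr n\<close> \<open>u \<in> std_tr scale (Agr 0) \<Lambda> R e la\<close> by blast
      then have "x * u \<in> Q.XU n la" unfolding XUeq .
      then have "x * u \<in> Bn \<union> Q.XU n la \<union> Q.VY n mu" by (rule UnI1[OF UnI2])
      then show "\<theta> (x * u) = 0" by (rule th_van[rule_format, OF Q.span_base])
    qed
    show "\<And>v y. v \<in> costd_tr scale (Agr 0) \<Lambda> R e mu \<Longrightarrow> y \<in> Agr n \<Longrightarrow> \<theta> (v * y) = 0"
    proof -
      fix v y assume "v \<in> costd_tr scale (Agr 0) \<Lambda> R e mu" "y \<in> Agr n"
      have VYeq: "Q.VY n mu = {v * y |v y. v \<in> costd_tr scale (Agr 0) \<Lambda> R e mu \<and> y \<in> Agr n}"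
        by (rule Q.VY_def[OF Bn_sub Bn_deg Bn_left Bn_right notall])
      have "v * y \<in> {v * y |v y. v \<in> costd_tr scale (Agr 0) \<Lambda> R e mu \<and> y \<in> Agr n}"
        using \<open>v \<in> costd_tr scale (Agr 0) \<Lambda> R e mu\<close> \<open>y \<in> Agr n\<close> by blast
      then have "v * y \<in> Q.VY n mu" unfolding VYeq .
      then have "v * y \<in> Bn \<union> Q.XU n la \<union> Q.VY n mu" by (rule UnI2)
      then show "\<theta> (v * y) = 0" by (rule th_van[rule_format, OF Q.span_base])
    qed
    show "y \<in> Agr n" "y * e la = y" by (rule y(1), rule y(2))
    show "\<theta> (e mu * y) \<noteq> 0" using th_w by simp
  qed
  have "ext1_nonzero scale Agr (Delta0 scale Agr \<Lambda> R e la) (shift (int n) (Nabla0 scale Agr \<Lambda> R e mu))"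
    using EXT.ext1[OF EX] .
  then have "int n = 1" using Q_Koszul_1 la mu by blast
  then show False using n2 by simp
qed

end
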